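(* Suppose the embedded jump chain is recurrent. Let $f\in\mathrm{Dom}_+(\Gamma)$ be strictly positive with $\sup_{x\in\mathbb X}f(x)=b<\infty$, and assume that for every $a$ with $0<a<b$ the sublevel set $\{f\le a\}$ is finite. Let $g:[0,b]\to[0,\infty)$ be increasing with $B:=\int_0^b\frac{dy}{g(y)}<\infty$. Fix $a\in(0,b)$. If $\Gamma f(x)\le-g(f(x))$ for all $x\notin\{f\le a\}$, then $\mathbb E_x\tau_{\{f\le a\}}\le B$ for all $x\notin\{f\le a\}$ (i.e.\ the chain implodes towards $\{f\le a\}$).
   Context: Let $\mathbb X$ be a countably infinite set and $\Gamma=(\Gamma_{xy})_{x,y\in\mathbb X}$ a matrix with $\Gamma_{xy}\ge0$ for $y\ne x$, $\gamma_x:=\sum_{y\ne x}\Gamma_{xy}$, $\Gamma_{xx}=-\gamma_x$, and $0<\gamma_x<\infty$ for all $x$. Let $P_{xy}=\Gamma_{xy}/\gamma_x$ for $y\neq x$ and $P_{xx}=0$; the discrete-time chain $(\tilde\xi_n)$ with transition matrix $P$ (embedded jump chain) is assumed irreducible. The continuous-time Markov chain $(\xi_t)_{t\ge0}$ with generator $\Gamma$: conditionally on $\tilde\xi$, holding times $\sigma_n$ ($n\ge1$) are independent exponential with parameter $\gamma_{\tilde\xi_{n-1}}$; $J_0=0$, $J_n=\sigma_1+\dots+\sigma_n$, $\zeta=\lim_nJ_n$; $\xi_t=\tilde\xi_n$ on $[J_n,J_{n+1})$, $\xi_t=\partial$ for $t\ge\zeta$. $\mathbb E_x$ refers to $\xi_0=x$;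 $\tau_A=\inf\{t\ge0:\xi_t\in A\}$. $\mathrm{Dom}(\Gamma)=\{f:\mathbb X\to\mathbb R:\ \sum_{y\ne x}\Gamma_{xy}|f(y)|<\infty\ \forall x\}$, $\mathrm{Dom}_+(\Gamma)$ its non-negative elements, $\Gamma f(x)=\sum_{y}\Gamma_{xy}f(y)$. $\{f\le a\}:=\{x:f(x)\le a\}$. *)

theory Defs
  imports "HOL-Probability.Probability"
begin

definition jump_rate :: "('x \<Rightarrow> 'x \<Rightarrow> real) \<Rightarrow> 'x \<Rightarrow> real" where
  "jump_rate \<Gamma> x = (\<Sum>\<^sub>\<infinity> y\<in>UNIV - {x}. \<Gamma> x y)"

definition is_Q_matrix :: "('x \<Rightarrow> 'x \<Rightarrow> real) \<Rightarrow> bool" where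
  "is_Q_matrix \<Gamma> \<longleftrightarrow>
     (\<forall>x y. x \<noteq> y \<longrightarrow> 0 \<le> \<Gamma> x y) \<and>
     (\<forall>x. (\<Gamma> x) summable_on (UNIV - {x})) \<and>
     (\<forall>x. \<Gamma> x x = - jump_rate \<Gamma> x) \<and>
     (\<forall>x. 0 < jump_rate \<Gamma> x)"

definition jumpP :: "('x \<Rightarrow> 'x \<Rightarrow> real) \<Rightarrow> 'x \<Rightarrow> 'x \<Rightarrow> real" where
  "jumpP \<Gamma> x y = (if y = x then 0 else \<Gamma> x y / jump_rate \<Gamma> x)"

definition jump_irreducible :: "('x \<Rightarrow> 'x \<Rightarrow> real) \<Rightarrow> bool" where
  "jump_irreducible \<Gamma> \<longleftrightarrow> (\<forall>x y. (x, y) \<in> {(u, v). 0 < jumpP \<Gamma> u v}\<^sup>*)"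

text \<open>First-passage probabilities of the jump chain: probability that, started at x,
  the chain visits y for the first time (at a positive time) at step n.\<close>
fun first_passage :: "('x \<Rightarrow> 'x \<Rightarrow> real) \<Rightarrow> nat \<Rightarrow> 'x \<Rightarrow> 'x \<Rightarrow> ennreal" where
  "first_passage \<Gamma> 0 x y = 0"
| "first_passage \<Gamma> (Suc n) x y =
     (if n = 0 then ennreal (jumpP \<Gamma> x y)
      else (\<Sum>\<^sub>\<infinity> z\<in>UNIV - {y}. ennreal (jumpP \<Gamma> x z) * first_passage \<Gamma> n z y))"

definition jump_recurrent :: "('x \<Rightarrow> 'x \<Rightarrow> real) \<Rightarrow> bool" where
  "jump_recurrent \<Gamma> \<longleftrightarrow> (\<forall>x. (\<Sum>n. first_passage \<Gamma> n x x) = 1)"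

definition in_Dom :: "('x \<Rightarrow> 'x \<Rightarrow> real) \<Rightarrow> ('x \<Rightarrow> real) \<Rightarrow> bool" where
  "in_Dom \<Gamma> f \<longleftrightarrow> (\<forall>x. (\<lambda>y. \<Gamma> x y * \<bar>f y\<bar>) summable_on (UNIV - {x}))"

definition in_Dom_plus :: "('x \<Rightarrow> 'x \<Rightarrow> real) \<Rightarrow> ('x \<Rightarrow> real) \<Rightarrow> bool" where
  "in_Dom_plus \<Gamma> f \<longleftrightarrow> in_Dom \<Gamma> f \<and> (\<forall>x. 0 \<le> f x)"

definition gen_apply :: "('x \<Rightarrow> 'x \<Rightarrow> real) \<Rightarrow> ('x \<Rightarrow> real) \<Rightarrow> 'x \<Rightarrow> real" where
  "gen_apply \<Gamma> f x = (\<Sum>\<^sub>\<infinity> y\<in>UNIV - {x}. \<Gamma> x y * f y) + \<Gamma> x x * f x"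

text \<open>X n = embedded jump chain at step n; S n (n \<ge> 1) = n-th holding time sigma_n.
  The assumption fixes the joint law of (X_0..X_n, S_1..S_n) for every n:
  started at x0, jump chain with matrix P, and conditionally independent
  exponential holding times with parameter gamma(X_(k-1)).\<close>
definition ctmc_law ::
  "'w measure \<Rightarrow> (nat \<Rightarrow> 'w \<Rightarrow> 'x) \<Rightarrow> (nat \<Rightarrow> 'w \<Rightarrow> real) \<Rightarrow> ('x \<Rightarrow> 'x \<Rightarrow> real) \<Rightarrow> 'x \<Rightarrow> bool" where
  "ctmc_law M X S \<Gamma> x0 \<longleftrightarrow>
     prob_space M \<and>
     (\<forall>n. X n \<in> measurable M (count_space UNIV)) \<and>
     (\<forall>n. S n \<in> borel_measurable M) \<and>
     (\<forall>n (xs :: nat \<Rightarrow> 'x) (ts :: nat \<Rightarrow> real). (\<forall>k. 0 \<le> ts k) \<longrightarrow>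
        measure M {\<omega> \<in> space M. (\<forall>k\<le>n. X k \<omega> = xs k) \<and> (\<forall>k\<in>{1..n}. ts k < S k \<omega>)}
        = (if xs 0 = x0 then 1 else 0) *
          (\<Prod>k\<in>{1..n}. jumpP \<Gamma> (xs (k - 1)) (xs k) * exp (- jump_rate \<Gamma> (xs (k - 1)) * ts k)))"

definition jump_time :: "(nat \<Rightarrow> 'w \<Rightarrow> real) \<Rightarrow> nat \<Rightarrow> 'w \<Rightarrow> real" where
  "jump_time S n \<omega> = (\<Sum>k\<in>{1..n}. S k \<omega>)"

text \<open>State at time t; None plays the role of the cemetery state (t \<ge> zeta).\<close>
definition ctmc_state :: "(nat \<Rightarrow> 'w \<Rightarrow> 'x) \<Rightarrow> (nat \<Rightarrow> 'w \<Rightarrow> real) \<Rightarrow> real \<Rightarrow> 'w \<Rightarrow> 'x option" where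
  "ctmc_state X S t \<omega> =
     (if \<exists>n. jump_time S n \<omega> \<le> t \<and> t < jump_time S (Suc n) \<omega>
      then Some (X (LEAST n. jump_time S n \<omega> \<le> t \<and> t < jump_time S (Suc n) \<omega>) \<omega>)
      else None)"

definition hit_time :: "(nat \<Rightarrow> 'w \<Rightarrow> 'x) \<Rightarrow> (nat \<Rightarrow> 'w \<Rightarrow> real) \<Rightarrow> 'x set \<Rightarrow> 'w \<Rightarrow> ennreal" where
  "hit_time X S A \<omega> = Inf {ennreal t | t. 0 \<le> t \<and> ctmc_state X S t \<omega> \<in> Some ` A}"

end

theory Submission
  imports Defs
begin
lemma nn_integral_real_infsum:
  fixes f :: "'a \<Rightarrow> real"
  assumes "f summable_on A" "\<And>x. x \<in> A \<Longrightarrow> 0 \<le> f x"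
  shows "(\<integral>\<^sup>+x. ennreal (f x) \<partial>count_space A) = ennreal (infsum f A)"
proof -
  have "(\<lambda>x. norm (f x)) summable_on A"
    using assms by (subst summable_on_cong[where g=f]) auto
  then have "Infinite_Sum.abs_summable_on f A" by simp
  then have ab: "Infinite_Set_Sum.abs_summable_on f A" using abs_summable_equivalent by blast
  show ?thesis
    using nn_integral_conv_infsetsum[OF ab] infsetsum_infsum[OF ab] assms by simp
qed

lemma infsum_ennreal_nn_integral:
  fixes f :: "'a \<Rightarrow> ennreal"
  assumes "countable A"
  shows "infsum f A = (\<integral>\<^sup>+x. f x \<partial>count_space A)"
proof (cases "finite A")
  case True
  then show ?thesis by (simp add: nn_integral_count_space_finite)
next
  case False
  note bij = bij_betw_from_nat_into[OF assms False]
  have "(\<integral>\<^sup>+x. f x \<partial>count_space A) = (\<integral>\<^sup>+n. f (from_nat_into A n) \<partial>count_space UNIV)"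
    by (rule nn_integral_bij_count_space[OF bij, symmetric])
  also have "\<dots> = (\<Sum>n. f (from_nat_into A n))"
    by (rule nn_integral_count_space_nat)
  also have "\<dots> = infsum (\<lambda>n. f (from_nat_into A n)) UNIV"
  proof -
    have "((\<lambda>n. f (from_nat_into A n)) has_sum infsum (\<lambda>n. f (from_nat_into A n)) UNIV) UNIV"
      by (rule has_sum_infsum) (rule nonneg_summable_on_complete, simp)
    then have "(\<lambda>n. f (from_nat_into A n)) sums infsum (\<lambda>n. f (from_nat_into A n)) UNIV"
      by (rule has_sum_imp_sums)
    then show ?thesis by (rule sums_unique[symmetric])
  qed
  also have "\<dots> = infsum f A"
    by (rule infsum_reindex_bij_betw[OF bij])
  finally show ?thesis ..
qed

lemma nn_integral_count_space_swap:
  fixes F :: "'a::countable \<Rightarrow> 'b::countable \<Rightarrow> ennreal"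
  shows "(\<integral>\<^sup>+x. \<integral>\<^sup>+y. F x y \<partial>count_space UNIV \<partial>count_space UNIV)
       = (\<integral>\<^sup>+y. \<integral>\<^sup>+x. F x y \<partial>count_space UNIV \<partial>count_space UNIV)"
  using nn_integral_count_space_nn_integral[of UNIV "\<lambda>y x. F x y" "count_space UNIV"]
  by simp

lemma nn_integral_count_space_single:
  "(\<integral>\<^sup>+z. indicator {x} z * F z \<partial>count_space UNIV) = F x"
  by (subst nn_integral_count_space'[where A="{x}"]) auto

lemma nn_integral_count_space_single':
  "(\<integral>\<^sup>+z. F z * indicator {x} z \<partial>count_space UNIV) = F x"
  by (subst nn_integral_count_space'[where A="{x}"]) auto

locale qmat =
  fixes \<Gamma> :: "'x::countable \<Rightarrow> 'x \<Rightarrow> real"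
  assumes Q: "is_Q_matrix \<Gamma>"
begin

definition Pe :: "'x \<Rightarrow> 'x \<Rightarrow> ennreal" where
  "Pe w z = ennreal (jumpP \<Gamma> w z)"

lemma gamma_pos: "0 < jump_rate \<Gamma> y"
  using Q by (simp add: is_Q_matrix_def)

lemma Gamma_nonneg: "y \<noteq> z \<Longrightarrow> 0 \<le> \<Gamma> y z"
  using Q by (simp add: is_Q_matrix_def)

lemma Gamma_summable: "(\<Gamma> y) summable_on (UNIV - {y})"
  using Q by (simp add: is_Q_matrix_def)

lemma jumpP_nonneg: "0 \<le> jumpP \<Gamma> y z"
  using gamma_pos[of y] Gamma_nonneg[of y z] by (simp add: jumpP_def)

lemma sum_jumpP_fun:
  assumes "(\<lambda>z. \<Gamma> y z * h z) summable_on (UNIV - {y})" "\<And>z. 0 \<le> h z"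
  shows "(\<integral>\<^sup>+z. ennreal (jumpP \<Gamma> y z * h z) \<partial>count_space UNIV)
       = ennreal ((\<Sum>\<^sub>\<infinity>z\<in>UNIV - {y}. \<Gamma> y z * h z) / jump_rate \<Gamma> y)"
proof -
  have "(\<integral>\<^sup>+z. ennreal (jumpP \<Gamma> y z * h z) \<partial>count_space UNIV)
      = (\<integral>\<^sup>+z. ennreal (jumpP \<Gamma> y z * h z) \<partial>count_space (UNIV - {y}))"
    by (rule nn_integral_count_space_eq) (auto simp: jumpP_def)
  also have "\<dots> = (\<integral>\<^sup>+z. ennreal (\<Gamma> y z * h z * (1 / jump_rate \<Gamma> y)) \<partial>count_space (UNIV - {y}))"
    by (rule nn_integral_cong) (auto simp: jumpP_def)
  also have "\<dots> = ennreal (\<Sum>\<^sub>\<infinity>z\<in>UNIV - {y}. \<Gamma> y z * h z * (1 / jump_rate \<Gamma> y))"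
    using assms gamma_pos[of y] Gamma_nonneg[of y]
    by (intro nn_integral_real_infsum summable_on_cmult_left) auto
  also have "\<dots> = ennreal ((\<Sum>\<^sub>\<infinity>z\<in>UNIV - {y}. \<Gamma> y z * h z) / jump_rate \<Gamma> y)"
    using assms by (subst infsum_cmult_left) auto
  finally show ?thesis .
qed

lemma sumP: "(\<integral>\<^sup>+z. Pe y z \<partial>count_space UNIV) = 1"
proof -
  have "(\<integral>\<^sup>+z. Pe y z \<partial>count_space UNIV) = (\<integral>\<^sup>+z. ennreal (jumpP \<Gamma> y z * 1) \<partial>count_space UNIV)"
    by (simp add: Pe_def)
  also have "\<dots> = ennreal ((\<Sum>\<^sub>\<infinity>z\<in>UNIV - {y}. \<Gamma> y z * 1) / jump_rate \<Gamma> y)"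
    using Gamma_summable[of y] by (intro sum_jumpP_fun) auto
  also have "\<dots> = 1" using gamma_pos[of y] by (simp add: jump_rate_def)
  finally show ?thesis .
qed

fun nu :: "'x \<Rightarrow> 'x set \<Rightarrow> nat \<Rightarrow> 'x \<Rightarrow> ennreal" where
  "nu x0 T 0 z = indicator {x0} z"
| "nu x0 T (Suc n) z = indicator T z * (\<integral>\<^sup>+w. nu x0 T n w * Pe w z \<partial>count_space UNIV)"

lemma nu_mono_set: "T' \<subseteq> T \<Longrightarrow> nu x0 T' n z \<le> nu x0 T n z"
proof (induction n arbitrary: z)
  case 0 then show ?case by simp
next
  case (Suc n)
  have "(\<integral>\<^sup>+w. nu x0 T' n w * Pe w z \<partial>count_space UNIV) \<le> (\<integral>\<^sup>+w. nu x0 T n w * Pe w z \<partial>count_space UNIV)"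
    using Suc by (intro nn_integral_mono mult_right_mono) auto
  moreover have "indicator T' z \<le> (indicator T z :: ennreal)"
    using Suc.prems by (auto split: split_indicator)
  ultimately show ?case by (simp add: mult_mono)
qed

lemma nu_step_sum:
  "(\<integral>\<^sup>+z. nu x0 T (Suc n) z \<partial>count_space UNIV)
   = (\<integral>\<^sup>+w. nu x0 T n w * (\<integral>\<^sup>+z. indicator T z * Pe w z \<partial>count_space UNIV) \<partial>count_space UNIV)"
proof -
  have "(\<integral>\<^sup>+z. nu x0 T (Suc n) z \<partial>count_space UNIV)
     = (\<integral>\<^sup>+z. \<integral>\<^sup>+w. indicator T z * (nu x0 T n w * Pe w z) \<partial>count_space UNIV \<partial>count_space UNIV)"
    by (simp add: nn_integral_cmult)
  also have "\<dots> = (\<integral>\<^sup>+w. \<integral>\<^sup>+z. nu x0 T n w * (indicator T z * Pe w z) \<partial>count_space UNIV \<partial>count_space UNIV)"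
    by (subst nn_integral_count_space_swap) (simp add: mult_ac)
  also have "\<dots> = (\<integral>\<^sup>+w. nu x0 T n w * (\<integral>\<^sup>+z. indicator T z * Pe w z \<partial>count_space UNIV) \<partial>count_space UNIV)"
    by (simp add: nn_integral_cmult)
  finally show ?thesis .
qed

lemma nu_mass: "(\<integral>\<^sup>+z. nu x0 UNIV n z \<partial>count_space UNIV) = 1"
proof (induction n)
  case 0 then show ?case by (simp add: nn_integral_count_space_single')
next
  case (Suc n)
  then show ?case by (simp add: nu_step_sum sumP del: nu.simps)
qed

end

context qmat
begin

lemma nu_Suc_at_x0: "x0 \<notin> T \<Longrightarrow> nu x0 T (Suc m) x0 = 0"
  by simp

lemma last_exit_key:
  assumes "x0 \<in> T"
  shows "indicator T z * (\<integral>\<^sup>+w. nu x0 (T - {x0}) m w * Pe w z \<partial>count_space UNIV)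
       = nu x0 (T - {x0}) (Suc m) z
         + indicator {x0} z * (\<integral>\<^sup>+w. nu x0 (T - {x0}) m w * Pe w x0 \<partial>count_space UNIV)"
  using assms by (cases "z = x0"; cases "z \<in> T") auto

lemma last_exit:
  assumes "x0 \<in> T"
  shows "nu x0 T n z = (\<Sum>j\<le>n. nu x0 T j x0 * nu x0 (T - {x0}) (n - j) z)"
proof (induction n arbitrary: z)
  case 0
  then show ?case by (simp split: split_indicator)
next
  case (Suc n)
  define s where "s = nu x0 (T - {x0})"
  define c where "c m = (\<integral>\<^sup>+w. s m w * Pe w x0 \<partial>count_space UNIV)" for m
  have E: "nu x0 T (Suc n) z' = (\<Sum>j\<le>n. nu x0 T j x0 * s (Suc n - j) z')
            + indicator {x0} z' * (\<Sum>j\<le>n. nu x0 T j x0 * c (n - j))" for z'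
  proof -
    have "nu x0 T (Suc n) z' = indicator T z' *
            (\<integral>\<^sup>+w. (\<Sum>j\<le>n. nu x0 T j x0 * s (n - j) w) * Pe w z' \<partial>count_space UNIV)"
      using Suc.IH by (simp add: s_def)
    also have "\<dots> = indicator T z' *
            (\<Sum>j\<le>n. nu x0 T j x0 * (\<integral>\<^sup>+w. s (n - j) w * Pe w z' \<partial>count_space UNIV))"
      by (simp add: sum_distrib_right nn_integral_sum nn_integral_cmult mult.assoc)
    also have "\<dots> = (\<Sum>j\<le>n. nu x0 T j x0 *
            (indicator T z' * (\<integral>\<^sup>+w. s (n - j) w * Pe w z' \<partial>count_space UNIV)))"
      by (simp add: sum_distrib_left mult_ac)
    also have "\<dots> = (\<Sum>j\<le>n. nu x0 T j x0 * (s (Suc (n - j)) z' + indicator {x0} z' * c (n - j)))"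
      unfolding s_def c_def by (simp only: last_exit_key[OF assms])
    also have "\<dots> = (\<Sum>j\<le>n. nu x0 T j x0 * s (Suc n - j) z')
            + indicator {x0} z' * (\<Sum>j\<le>n. nu x0 T j x0 * c (n - j))"
      by (simp add: distrib_left sum.distrib sum_distrib_left Suc_diff_le mult_ac)
    finally show ?thesis .
  qed
  have zero: "s (Suc n - j) x0 = 0" if "j \<le> n" for j
    using that by (simp add: s_def Suc_diff_le)
  have "nu x0 T (Suc n) x0 = (\<Sum>j\<le>n. nu x0 T j x0 * c (n - j))"
    using E[of x0] zero by simp
  then have "nu x0 T (Suc n) z = (\<Sum>j\<le>n. nu x0 T j x0 * s (Suc n - j) z)
            + indicator {x0} z * nu x0 T (Suc n) x0"
    using E[of z] by simp
  also have "\<dots> = (\<Sum>j\<le>Suc n. nu x0 T j x0 * s (Suc n - j) z)"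
    by (simp add: s_def mult.commute)
  finally show ?case by (simp add: s_def)
qed

end

context qmat
begin

lemma fp_SucSuc:
  "first_passage \<Gamma> (Suc (Suc k)) z y
   = (\<integral>\<^sup>+w. indicator (- {y}) w * Pe z w * first_passage \<Gamma> (Suc k) w y \<partial>count_space UNIV)"
proof -
  have "first_passage \<Gamma> (Suc (Suc k)) z y
      = (\<Sum>\<^sub>\<infinity>w\<in>UNIV - {y}. ennreal (jumpP \<Gamma> z w) * first_passage \<Gamma> (Suc k) w y)"
    by simp
  also have "\<dots> = (\<integral>\<^sup>+w. ennreal (jumpP \<Gamma> z w) * first_passage \<Gamma> (Suc k) w y \<partial>count_space (UNIV - {y}))"
    by (rule infsum_ennreal_nn_integral) simp
  also have "\<dots> = (\<integral>\<^sup>+w. indicator (- {y}) w * Pe z w * first_passage \<Gamma> (Suc k) w y \<partial>count_space UNIV)"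
    by (subst nn_integral_count_space_indicator) (auto simp: Pe_def Compl_eq_Diff_UNIV intro!: nn_integral_cong split: split_indicator)
  finally show ?thesis .
qed

lemma fp_dual:
  "(\<integral>\<^sup>+z. nu x0 (- {x0}) m z * first_passage \<Gamma> (Suc k) z x0 \<partial>count_space UNIV)
   = (\<integral>\<^sup>+w. nu x0 (- {x0}) (m + k) w * Pe w x0 \<partial>count_space UNIV)"
proof (induction k arbitrary: m)
  case 0
  then show ?case by (simp add: Pe_def)
next
  case (Suc k)
  have "(\<integral>\<^sup>+z. nu x0 (- {x0}) m z * first_passage \<Gamma> (Suc (Suc k)) z x0 \<partial>count_space UNIV)
     = (\<integral>\<^sup>+z. \<integral>\<^sup>+w. nu x0 (- {x0}) m z * (indicator (- {x0}) w * Pe z w * first_passage \<Gamma> (Suc k) w x0) \<partial>count_space UNIV \<partial>count_space UNIV)"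
    by (simp add: fp_SucSuc nn_integral_cmult del: first_passage.simps)
  also have "\<dots> = (\<integral>\<^sup>+w. \<integral>\<^sup>+z. (indicator (- {x0}) w * first_passage \<Gamma> (Suc k) w x0) * (nu x0 (- {x0}) m z * Pe z w) \<partial>count_space UNIV \<partial>count_space UNIV)"
    by (subst nn_integral_count_space_swap) (simp add: mult_ac)
  also have "\<dots> = (\<integral>\<^sup>+w. (indicator (- {x0}) w * first_passage \<Gamma> (Suc k) w x0) * (\<integral>\<^sup>+z. nu x0 (- {x0}) m z * Pe z w \<partial>count_space UNIV) \<partial>count_space UNIV)"
    by (rule nn_integral_cong) (rule nn_integral_cmult, simp)
  also have "\<dots> = (\<integral>\<^sup>+w. nu x0 (- {x0}) (Suc m) w * first_passage \<Gamma> (Suc k) w x0 \<partial>count_space UNIV)"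
    by (simp add: mult_ac del: first_passage.simps)
  also have "\<dots> = (\<integral>\<^sup>+w. nu x0 (- {x0}) (m + Suc k) w * Pe w x0 \<partial>count_space UNIV)"
    using Suc.IH[of "Suc m"] by simp
  finally show ?case .
qed

lemma fp_forward:
  "first_passage \<Gamma> (Suc k) x0 x0 = (\<integral>\<^sup>+w. nu x0 (- {x0}) k w * Pe w x0 \<partial>count_space UNIV)"
  using fp_dual[of x0 0 k] by (simp add: nn_integral_count_space_single del: first_passage.simps)

lemma sig_step:
  "(\<integral>\<^sup>+z. nu x0 (- {x0}) (Suc m) z \<partial>count_space UNIV)
   + (\<integral>\<^sup>+w. nu x0 (- {x0}) m w * Pe w x0 \<partial>count_space UNIV)
   = (\<integral>\<^sup>+z. nu x0 (- {x0}) m z \<partial>count_space UNIV)"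
proof -
  have split: "(\<integral>\<^sup>+z. indicator (- {x0}) z * Pe w z \<partial>count_space UNIV) + Pe w x0 = 1" for w
  proof -
    have "(\<integral>\<^sup>+z. indicator (- {x0}) z * Pe w z \<partial>count_space UNIV) + Pe w x0
        = (\<integral>\<^sup>+z. indicator (- {x0}) z * Pe w z \<partial>count_space UNIV)
          + (\<integral>\<^sup>+z. indicator {x0} z * Pe w z \<partial>count_space UNIV)"
      by (simp add: nn_integral_count_space_single)
    also have "\<dots> = (\<integral>\<^sup>+z. indicator (- {x0}) z * Pe w z + indicator {x0} z * Pe w z \<partial>count_space UNIV)"
      by (rule nn_integral_add[symmetric]) auto
    also have "\<dots> = (\<integral>\<^sup>+z. Pe w z \<partial>count_space UNIV)"
      by (rule nn_integral_cong) (auto split: split_indicator)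
    finally show ?thesis by (simp add: sumP)
  qed
  have "(\<integral>\<^sup>+z. nu x0 (- {x0}) (Suc m) z \<partial>count_space UNIV)
        + (\<integral>\<^sup>+w. nu x0 (- {x0}) m w * Pe w x0 \<partial>count_space UNIV)
      = (\<integral>\<^sup>+w. nu x0 (- {x0}) m w * (\<integral>\<^sup>+z. indicator (- {x0}) z * Pe w z \<partial>count_space UNIV)
          + nu x0 (- {x0}) m w * Pe w x0 \<partial>count_space UNIV)"
    by (subst nu_step_sum) (rule nn_integral_add[symmetric], auto)
  also have "\<dots> = (\<integral>\<^sup>+w. nu x0 (- {x0}) m w \<partial>count_space UNIV)"
    by (rule nn_integral_cong) (simp add: distrib_left[symmetric] split)
  finally show ?thesis .
qed

lemma sig_eq:
  "(\<integral>\<^sup>+z. nu x0 (- {x0}) m z \<partial>count_space UNIV) + (\<Sum>j<m. first_passage \<Gamma> (Suc j) x0 x0) = 1"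
proof (induction m)
  case 0
  then show ?case by (simp add: nn_integral_count_space_single')
next
  case (Suc m)
  have "(\<integral>\<^sup>+z. nu x0 (- {x0}) (Suc m) z \<partial>count_space UNIV) + (\<Sum>j<Suc m. first_passage \<Gamma> (Suc j) x0 x0)
      = ((\<integral>\<^sup>+z. nu x0 (- {x0}) (Suc m) z \<partial>count_space UNIV)
          + (\<integral>\<^sup>+w. nu x0 (- {x0}) m w * Pe w x0 \<partial>count_space UNIV))
        + (\<Sum>j<m. first_passage \<Gamma> (Suc j) x0 x0)"
    by (simp add: fp_forward add_ac del: nu.simps first_passage.simps)
  also have "\<dots> = 1" by (simp only: sig_step Suc.IH)
  finally show ?case .
qed

lemma sig_tendsto:
  assumes rec: "(\<Sum>n. first_passage \<Gamma> n x0 x0) = 1"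
  shows "(\<lambda>m. \<integral>\<^sup>+z. nu x0 (- {x0}) m z \<partial>count_space UNIV) \<longlonglongrightarrow> 0"
proof -
  define p where "p m = (\<Sum>i\<le>m. first_passage \<Gamma> i x0 x0)" for m
  have p_eq: "p m = (\<Sum>j<m. first_passage \<Gamma> (Suc j) x0 x0)" for m
    unfolding p_def by (subst lessThan_Suc_atMost[symmetric], subst sum.lessThan_Suc_shift) simp
  have lim: "p \<longlonglongrightarrow> 1"
    unfolding p_def using summable_LIMSEQ'[of "\<lambda>i. first_passage \<Gamma> i x0 x0"] rec by simp
  have p_le: "p m \<le> 1" for m
    using sig_eq[of x0 m] unfolding p_eq by (metis add.commute le_iff_add)
  have "(\<integral>\<^sup>+z. nu x0 (- {x0}) m z \<partial>count_space UNIV) = 1 - p m" for m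
  proof -
    have "p m \<noteq> top" using p_le[of m] by (auto simp: top_unique)
    then show ?thesis using sig_eq[of x0 m] unfolding p_eq[symmetric]
      by (metis ennreal_add_diff_cancel_right)
  qed
  moreover have "(\<lambda>m. 1 - p m) \<longlonglongrightarrow> 1 - 1"
    by (intro tendsto_diff_ennreal tendsto_const lim) auto
  ultimately show ?thesis by simp
qed

end

context qmat
begin

fun Wf :: "'x set \<Rightarrow> nat \<Rightarrow> 'x \<Rightarrow> ennreal" where
  "Wf T 0 y = 0"
| "Wf T (Suc n) y = ennreal (1 / jump_rate \<Gamma> y) + (\<integral>\<^sup>+z. Pe y z * indicator T z * Wf T n z \<partial>count_space UNIV)"

lemma Wf_dual:
  "(\<integral>\<^sup>+z. nu x0 T m z * Wf T n z \<partial>count_space UNIV)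
   = (\<Sum>j<n. \<integral>\<^sup>+z. nu x0 T (m + j) z * ennreal (1 / jump_rate \<Gamma> z) \<partial>count_space UNIV)"
proof (induction n arbitrary: m)
  case 0
  then show ?case by simp
next
  case (Suc n)
  have "(\<integral>\<^sup>+z. nu x0 T m z * Wf T (Suc n) z \<partial>count_space UNIV)
      = (\<integral>\<^sup>+z. nu x0 T m z * ennreal (1 / jump_rate \<Gamma> z)
           + nu x0 T m z * (\<integral>\<^sup>+w. Pe z w * indicator T w * Wf T n w \<partial>count_space UNIV) \<partial>count_space UNIV)"
    by (simp add: distrib_left del: nu.simps)
  also have "\<dots> = (\<integral>\<^sup>+z. nu x0 T m z * ennreal (1 / jump_rate \<Gamma> z) \<partial>count_space UNIV)
      + (\<integral>\<^sup>+z. nu x0 T m z * (\<integral>\<^sup>+w. Pe z w * indicator T w * Wf T n w \<partial>count_space UNIV) \<partial>count_space UNIV)"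
    by (rule nn_integral_add) auto
  also have "(\<integral>\<^sup>+z. nu x0 T m z * (\<integral>\<^sup>+w. Pe z w * indicator T w * Wf T n w \<partial>count_space UNIV) \<partial>count_space UNIV)
      = (\<integral>\<^sup>+z. \<integral>\<^sup>+w. (indicator T w * Wf T n w) * (nu x0 T m z * Pe z w) \<partial>count_space UNIV \<partial>count_space UNIV)"
    by (rule nn_integral_cong) (simp add: nn_integral_cmult[symmetric] mult_ac del: nu.simps)
  also have "\<dots> = (\<integral>\<^sup>+w. \<integral>\<^sup>+z. (indicator T w * Wf T n w) * (nu x0 T m z * Pe z w) \<partial>count_space UNIV \<partial>count_space UNIV)"
    by (rule nn_integral_count_space_swap)
  also have "\<dots> = (\<integral>\<^sup>+w. (indicator T w * Wf T n w) * (\<integral>\<^sup>+z. nu x0 T m z * Pe z w \<partial>count_space UNIV) \<partial>count_space UNIV)"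
    by (rule nn_integral_cong) (rule nn_integral_cmult, simp)
  also have "\<dots> = (\<integral>\<^sup>+w. nu x0 T (Suc m) w * Wf T n w \<partial>count_space UNIV)"
    by (simp add: mult_ac)
  also have "\<dots> = (\<Sum>j<n. \<integral>\<^sup>+z. nu x0 T (Suc m + j) z * ennreal (1 / jump_rate \<Gamma> z) \<partial>count_space UNIV)"
    by (rule Suc.IH)
  finally show ?case
    by (subst sum.lessThan_Suc_shift) (simp del: nu.simps)
qed

lemma Wf_le:
  assumes drift: "\<And>y. y \<in> T \<Longrightarrow> ennreal (1 / jump_rate \<Gamma> y) + (\<integral>\<^sup>+z. Pe y z * H z \<partial>count_space UNIV) \<le> H y"
  shows "y \<in> T \<Longrightarrow> Wf T n y \<le> H y"
proof (induction n arbitrary: y)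
  case 0 then show ?case by simp
next
  case (Suc n)
  have "(\<integral>\<^sup>+z. Pe y z * indicator T z * Wf T n z \<partial>count_space UNIV) \<le> (\<integral>\<^sup>+z. Pe y z * H z \<partial>count_space UNIV)"
    using Suc.IH by (intro nn_integral_mono) (auto split: split_indicator intro: mult_left_mono)
  then show ?case using drift[OF Suc.prems] by (simp del: nu.simps) (meson add_left_mono order_trans)
qed

lemma total_le:
  assumes drift: "\<And>y. y \<in> T \<Longrightarrow> ennreal (1 / jump_rate \<Gamma> y) + (\<integral>\<^sup>+z. Pe y z * H z \<partial>count_space UNIV) \<le> H y"
    and x0: "x0 \<in> T"
  shows "(\<Sum>j. \<integral>\<^sup>+z. nu x0 T j z * ennreal (1 / jump_rate \<Gamma> z) \<partial>count_space UNIV) \<le> H x0"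
proof (rule suminf_le_const)
  fix n
  have "(\<Sum>j<n. \<integral>\<^sup>+z. nu x0 T j z * ennreal (1 / jump_rate \<Gamma> z) \<partial>count_space UNIV)
      = (\<integral>\<^sup>+z. nu x0 T 0 z * Wf T n z \<partial>count_space UNIV)"
    using Wf_dual[of x0 T 0 n] by simp
  also have "\<dots> = Wf T n x0" by (simp add: nn_integral_count_space_single)
  also have "\<dots> \<le> H x0" by (rule Wf_le[OF drift x0])
  finally show "(\<Sum>j<n. \<integral>\<^sup>+z. nu x0 T j z * ennreal (1 / jump_rate \<Gamma> z) \<partial>count_space UNIV) \<le> H x0" .
qed simp

end

lemma ennreal_le_suminf_term: "(f::nat \<Rightarrow> ennreal) j \<le> (\<Sum>n. f n)"
  using sum_le_suminf[of f "{j}"] by (simp add: summableI)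

context qmat
begin

lemma q_tendsto:
  assumes drift: "\<And>y. y \<in> T \<Longrightarrow> ennreal (1 / jump_rate \<Gamma> y) + (\<integral>\<^sup>+z. Pe y z * H z \<partial>count_space UNIV) \<le> H y"
    and x0: "x0 \<in> T" and Hfin: "H x0 < top"
    and rec: "(\<Sum>n. first_passage \<Gamma> n x0 x0) = 1"
  shows "(\<lambda>n. \<integral>\<^sup>+z. nu x0 T n z \<partial>count_space UNIV) \<longlonglongrightarrow> 0"
proof -
  define G where "G j = nu x0 T j x0" for j
  define sig where "sig m = (\<integral>\<^sup>+z. nu x0 (- {x0}) m z \<partial>count_space UNIV)" for m
  define c where "c = ennreal (1 / jump_rate \<Gamma> x0)"
  have c_pos: "c \<noteq> 0" using gamma_pos[of x0] by (simp add: c_def)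
  have Gc: "c * G j \<le> (\<integral>\<^sup>+z. nu x0 T j z * ennreal (1 / jump_rate \<Gamma> z) \<partial>count_space UNIV)" for j
  proof -
    have "c * G j = (\<integral>\<^sup>+z. indicator {x0} z * (nu x0 T j z * ennreal (1 / jump_rate \<Gamma> z)) \<partial>count_space UNIV)"
      by (simp add: nn_integral_count_space_single G_def c_def mult.commute del: nu.simps)
    also have "\<dots> \<le> (\<integral>\<^sup>+z. nu x0 T j z * ennreal (1 / jump_rate \<Gamma> z) \<partial>count_space UNIV)"
      by (intro nn_integral_mono) (auto split: split_indicator)
    finally show ?thesis .
  qed
  have "c * (\<Sum>j. G j) = (\<Sum>j. c * G j)" by simp
  also have "\<dots> \<le> (\<Sum>j. \<integral>\<^sup>+z. nu x0 T j z * ennreal (1 / jump_rate \<Gamma> z) \<partial>count_space UNIV)"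
    by (intro suminf_le Gc) (auto intro: summableI)
  also have "\<dots> \<le> H x0" by (rule total_le[OF drift x0])
  finally have "c * (\<Sum>j. G j) < top" using Hfin by (simp add: le_less_trans)
  then have Gfin: "(\<Sum>j. G j) < top"
    using c_pos by (metis ennreal_mult_eq_top_iff top.not_eq_extremum)
  have sig_le: "sig m \<le> 1" for m
    using sig_eq[of x0 m] unfolding sig_def by (metis le_iff_add)
  have sig_lim: "sig \<longlonglongrightarrow> 0" unfolding sig_def by (rule sig_tendsto[OF rec])
  have q_le: "(\<integral>\<^sup>+z. nu x0 T n z \<partial>count_space UNIV) \<le> (\<Sum>j\<le>n. G j * sig (n - j))" for n
  proof -
    have "(\<integral>\<^sup>+z. nu x0 T n z \<partial>count_space UNIV)
        = (\<integral>\<^sup>+z. (\<Sum>j\<le>n. G j * nu x0 (T - {x0}) (n - j) z) \<partial>count_space UNIV)"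
      unfolding G_def by (subst last_exit[OF x0]) rule
    also have "\<dots> = (\<Sum>j\<le>n. G j * (\<integral>\<^sup>+z. nu x0 (T - {x0}) (n - j) z \<partial>count_space UNIV))"
      by (simp add: nn_integral_sum nn_integral_cmult del: nu.simps)
    also have "\<dots> \<le> (\<Sum>j\<le>n. G j * sig (n - j))"
      unfolding sig_def
      by (intro sum_mono mult_left_mono nn_integral_mono nu_mono_set) auto
    finally show ?thesis .
  qed
  define u where "u n j = (if j \<le> n then G j * sig (n - j) else 0)" for n j
  have u_int: "(\<integral>\<^sup>+j. u n j \<partial>count_space UNIV) = (\<Sum>j\<le>n. G j * sig (n - j))" for n
    by (subst nn_integral_count_space'[where A="{..n}"]) (auto simp: u_def)
  have "(\<lambda>n. \<integral>\<^sup>+j. u n j \<partial>count_space UNIV) \<longlonglongrightarrow> (\<integral>\<^sup>+(j::nat). 0 \<partial>count_space UNIV)"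
  proof (rule nn_integral_dominated_convergence[where w=G and u=u and u'="\<lambda>_. 0" and M="count_space UNIV"])
    show "AE j in count_space UNIV. u n j \<le> G j" for n
      using sig_le by (auto simp: u_def intro!: AE_I2) (metis mult.right_neutral mult_left_mono zero_le)
    show "(\<integral>\<^sup>+j. G j \<partial>count_space UNIV) < \<infinity>"
      using Gfin by (simp add: nn_integral_count_space_nat)
    show "AE j in count_space UNIV. (\<lambda>n. u n j) \<longlonglongrightarrow> 0"
    proof (rule AE_I2)
      fix j
      have Gj: "G j < top" using ennreal_le_suminf_term[of G j] Gfin by (simp add: le_less_trans)
      have "(\<lambda>n. G j * sig n) \<longlonglongrightarrow> G j * 0"
        by (rule ennreal_tendsto_cmult[OF Gj sig_lim])
      then have "(\<lambda>n. u (n + j) j) \<longlonglongrightarrow> 0" by (simp add: u_def)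
      then show "(\<lambda>n. u n j) \<longlonglongrightarrow> 0" by (rule LIMSEQ_offset)
    qed
  qed auto
  then have lim: "(\<lambda>n. \<Sum>j\<le>n. G j * sig (n - j)) \<longlonglongrightarrow> 0" by (simp add: u_int)
  show ?thesis
    by (rule tendsto_sandwich[OF _ _ tendsto_const lim]) (auto intro!: always_eventually q_le)
qed

end

locale gfun =
  fixes g :: "real \<Rightarrow> real" and b :: real
  assumes gmono: "mono_on {0..b} g" and gnn: "\<forall>y\<in>{0..b}. 0 \<le> g y" and b0: "0 \<le> b"
begin

definition gc :: "real \<Rightarrow> real" where "gc t = g (max 0 (min b t))"

lemma gc_mono: "s \<le> t \<Longrightarrow> gc s \<le> gc t"
  unfolding gc_def using b0
  by (intro mono_onD[OF gmono]) (auto simp: max_def min_def)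

lemma gc_nn: "0 \<le> gc t"
  unfolding gc_def using gnn b0 by (auto simp: max_def min_def)

lemma gc_eq: "t \<in> {0..b} \<Longrightarrow> gc t = g t"
  by (auto simp: gc_def max_def min_def)

lemma gc_meas[measurable]: "gc \<in> borel_measurable borel"
  by (rule borel_measurable_mono) (auto simp: mono_def gc_mono)

definition I :: "real \<Rightarrow> ennreal" where
  "I u = (\<integral>\<^sup>+t. indicator {0..u} t * inverse (ennreal (gc t)) \<partial>lborel)"

definition J :: "real \<Rightarrow> real \<Rightarrow> ennreal" where
  "J u v = (\<integral>\<^sup>+t. indicator {u<..v} t * inverse (ennreal (gc t)) \<partial>lborel)"

lemma I_split: assumes "0 \<le> u" "u \<le> v" shows "I v = I u + J u v"
proof -
  have "I v = (\<integral>\<^sup>+t. indicator {0..u} t * inverse (ennreal (gc t)) + indicator {u<..v} t * inverse (ennreal (gc t)) \<partial>lborel)"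
    unfolding I_def using assms
    by (intro nn_integral_cong) (auto split: split_indicator simp: distrib_right[symmetric])
  also have "\<dots> = I u + J u v"
    unfolding I_def J_def by (rule nn_integral_add) auto
  finally show ?thesis .
qed

lemma J_upper: assumes "u \<le> v" "0 < gc u" shows "J u v \<le> ennreal ((v - u) / gc u)"
proof -
  have "J u v \<le> (\<integral>\<^sup>+t. ennreal (1 / gc u) * indicator {u<..v} t \<partial>lborel)"
    unfolding J_def
  proof (intro nn_integral_mono)
    fix t
    show "indicator {u<..v} t * inverse (ennreal (gc t)) \<le> ennreal (1 / gc u) * indicator {u<..v} t"
    proof (cases "t \<in> {u<..v}")
      case True
      then have "gc u \<le> gc t" by (intro gc_mono) auto
      then have "inverse (ennreal (gc t)) = ennreal (1 / gc t)" "1 / gc t \<le> 1 / gc u"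
        using assms by (auto simp: inverse_ennreal divide_simps)
      then show ?thesis using True by (auto intro: ennreal_leI)
    qed auto
  qed
  also have "\<dots> = ennreal (1 / gc u) * ennreal (v - u)"
    using assms by (subst nn_integral_cmult_indicator) auto
  also have "\<dots> = ennreal ((v - u) / gc u)"
    using assms by (simp add: ennreal_mult[symmetric])
  finally show ?thesis .
qed

lemma J_lower: assumes "u \<le> v" "0 < gc v" shows "ennreal ((v - u) / gc v) \<le> J u v"
proof -
  have "ennreal ((v - u) / gc v) = ennreal (1 / gc v) * ennreal (v - u)"
    using assms by (simp add: ennreal_mult[symmetric])
  also have "\<dots> = (\<integral>\<^sup>+t. ennreal (1 / gc v) * indicator {u<..v} t \<partial>lborel)"
    using assms by (subst nn_integral_cmult_indicator) auto
  also have "\<dots> \<le> J u v"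
    unfolding J_def
  proof (intro nn_integral_mono)
    fix t
    show "ennreal (1 / gc v) * indicator {u<..v} t \<le> indicator {u<..v} t * inverse (ennreal (gc t))"
    proof (cases "t \<in> {u<..v}")
      case True
      then have le: "gc t \<le> gc v" by (intro gc_mono) auto
      show ?thesis
      proof (cases "gc t = 0")
        case True then show ?thesis using \<open>t \<in> {u<..v}\<close> by simp
      next
        case False
        then have "0 < gc t" using gc_nn[of t] by simp
        then have "inverse (ennreal (gc t)) = ennreal (1 / gc t)" "1 / gc v \<le> 1 / gc t"
          using le by (auto simp: inverse_ennreal divide_simps)
        then show ?thesis using \<open>t \<in> {u<..v}\<close> by (auto intro: ennreal_leI)
      qed
    qed auto
  qed
  finally show ?thesis .
qed

lemma concave:
  assumes "0 \<le> p" "0 \<le> q" "0 < gc p"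
  shows "I q + ennreal (p / gc p) \<le> I p + ennreal (q / gc p)"
proof (cases "p \<le> q")
  case True
  have "I q + ennreal (p / gc p) = I p + J p q + ennreal (p / gc p)"
    using I_split[OF assms(1) True] by simp
  also have "\<dots> \<le> I p + ennreal ((q - p) / gc p) + ennreal (p / gc p)"
    using J_upper[OF True assms(3)] by (intro add_right_mono add_left_mono)
  also have "ennreal ((q - p) / gc p) + ennreal (p / gc p) = ennreal (q / gc p)"
    using True assms by (subst ennreal_plus[symmetric]) (auto simp: diff_divide_distrib divide_right_mono)
  then have "I p + ennreal ((q - p) / gc p) + ennreal (p / gc p) = I p + ennreal (q / gc p)"
    by (simp add: add.assoc)
  finally show ?thesis .
next
  case False
  then have qp: "q \<le> p" by simp
  have "ennreal ((p - q) / gc p) + ennreal (q / gc p) = ennreal (p / gc p)"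
    using qp assms by (subst ennreal_plus[symmetric]) (auto simp: diff_divide_distrib divide_right_mono)
  then have "I q + ennreal (p / gc p) = I q + ennreal ((p - q) / gc p) + ennreal (q / gc p)"
    by (simp add: add.assoc)
  also have "\<dots> \<le> I q + J q p + ennreal (q / gc p)"
    using J_lower[OF qp assms(3)] by (intro add_right_mono add_left_mono)
  also have "\<dots> = I p + ennreal (q / gc p)"
    using I_split[OF assms(2) qp] by simp
  finally show ?thesis .
qed

lemma I_mono: "u \<le> v \<Longrightarrow> I u \<le> I v"
  unfolding I_def by (intro nn_integral_mono) (auto split: split_indicator)

lemma I_b: "I b = (\<integral>\<^sup>+ y. indicator {0..b} y * inverse (ennreal (g y)) \<partial>lborel)"
  unfolding I_def by (intro nn_integral_cong) (auto split: split_indicator simp: gc_eq)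

lemma gc_pos:
  assumes "I b < top" "0 < u" "u \<le> b"
  shows "0 < gc u"
proof (rule ccontr)
  assume "\<not> 0 < gc u"
  then have z: "gc t = 0" if "t \<le> u" for t
    using gc_mono[OF that] gc_nn[of t] gc_nn[of u] by linarith
  have "(\<integral>\<^sup>+t. top * indicator {0..u} t \<partial>lborel) \<le> I b"
    unfolding I_def using assms
    by (intro nn_integral_mono) (auto split: split_indicator simp: z)
  moreover have "(\<integral>\<^sup>+t. top * indicator {0..u} t \<partial>lborel) = top"
    using assms by (subst nn_integral_cmult_indicator) (auto simp: ennreal_top_mult)
  ultimately show False using assms(1) by (simp add: top_unique)
qed

end

lemma drift_main:
  fixes \<Gamma> :: "'x::countable \<Rightarrow> 'x \<Rightarrow> real" and f :: "'x \<Rightarrow> real"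
  assumes Q: "is_Q_matrix \<Gamma>" and dom: "in_Dom_plus \<Gamma> f"
    and fpos: "\<forall>y. 0 < f y" and fle: "\<forall>y. f y \<le> b"
    and gmono: "mono_on {0..b} g" and gnn: "\<forall>y\<in>{0..b}. 0 \<le> g y"
    and Ib: "gfun.I g b b < top"
    and gen: "gen_apply \<Gamma> f y \<le> - g (f y)"
  shows "ennreal (1 / jump_rate \<Gamma> y) + (\<integral>\<^sup>+z. qmat.Pe \<Gamma> y z * gfun.I g b (f z) \<partial>count_space UNIV)
           \<le> gfun.I g b (f y)"
proof -
  interpret qmat \<Gamma> by (rule qmat.intro[OF Q])
  have b0: "0 \<le> b" using fpos fle by (metis less_le_trans less_imp_le)
  interpret gfun g b by (rule gfun.intro[OF gmono gnn b0])
  define c where "c = gc (f y)"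
  have fy: "0 < f y" "f y \<le> b" using fpos fle by auto
  have c_pos: "0 < c" unfolding c_def by (rule gc_pos[OF Ib fy])
  have c_eq: "c = g (f y)" unfolding c_def using fy by (simp add: gc_eq)
  define \<gamma> where "\<gamma> = jump_rate \<Gamma> y"
  have \<gamma>_pos: "0 < \<gamma>" unfolding \<gamma>_def by (rule gamma_pos)
  define Sf where "Sf = (\<Sum>\<^sub>\<infinity>z\<in>UNIV - {y}. \<Gamma> y z * f z)"
  have summ: "(\<lambda>z. \<Gamma> y z * f z) summable_on (UNIV - {y})"
  proof -
    have "(\<lambda>z. \<Gamma> y z * \<bar>f z\<bar>) summable_on (UNIV - {y})"
      using dom unfolding in_Dom_plus_def in_Dom_def by blast
    moreover have "\<bar>f z\<bar> = f z" for z using fpos by (simp add: less_imp_le)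
    ultimately show ?thesis by simp
  qed
  have Sf_nn: "0 \<le> Sf"
    unfolding Sf_def using fpos Gamma_nonneg by (intro infsum_nonneg) (metis DiffE insertI1 less_imp_le mult_nonneg_nonneg)
  have gen': "Sf - \<gamma> * f y \<le> - c"
    using gen Q unfolding gen_apply_def Sf_def \<gamma>_def c_eq is_Q_matrix_def by simp
  define R where "R = (Sf / c) / \<gamma>"
  have R_nn: "0 \<le> R" unfolding R_def using Sf_nn c_pos \<gamma>_pos by simp
  have R_le: "R + 1 / \<gamma> \<le> f y / c"
  proof -
    have "Sf \<le> \<gamma> * f y - c" using gen' by simp
    then have "Sf / c \<le> (\<gamma> * f y - c) / c" using c_pos by (simp add: divide_right_mono)
    then have "R \<le> ((\<gamma> * f y - c) / c) / \<gamma>" unfolding R_def by (rule divide_right_mono) (use \<gamma>_pos in auto)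
    also have "\<dots> = f y / c - 1 / \<gamma>" using c_pos \<gamma>_pos by (simp add: field_simps)
    finally show ?thesis by simp
  qed
  have pt: "I (f z) + ennreal (f y / c) \<le> I (f y) + ennreal (f z / c)" for z
    unfolding c_def using fpos by (intro concave) (auto intro: less_imp_le simp: c_def[symmetric] c_pos)
  have "(\<integral>\<^sup>+z. Pe y z * (I (f z) + ennreal (f y / c)) \<partial>count_space UNIV)
      \<le> (\<integral>\<^sup>+z. Pe y z * (I (f y) + ennreal (f z / c)) \<partial>count_space UNIV)"
    by (intro nn_integral_mono mult_left_mono pt) auto
  moreover have "(\<integral>\<^sup>+z. Pe y z * (I (f z) + ennreal (f y / c)) \<partial>count_space UNIV)
      = (\<integral>\<^sup>+z. Pe y z * I (f z) \<partial>count_space UNIV) + ennreal (f y / c)"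
  proof -
    have "(\<integral>\<^sup>+z. Pe y z * (I (f z) + ennreal (f y / c)) \<partial>count_space UNIV)
        = (\<integral>\<^sup>+z. Pe y z * I (f z) \<partial>count_space UNIV) + (\<integral>\<^sup>+z. Pe y z * ennreal (f y / c) \<partial>count_space UNIV)"
      by (simp add: distrib_left nn_integral_add)
    also have "(\<integral>\<^sup>+z. Pe y z * ennreal (f y / c) \<partial>count_space UNIV) = ennreal (f y / c)"
      by (simp add: nn_integral_multc sumP)
    finally show ?thesis .
  qed
  moreover have "(\<integral>\<^sup>+z. Pe y z * (I (f y) + ennreal (f z / c)) \<partial>count_space UNIV)
      = I (f y) + ennreal R"
  proof -
    have "(\<integral>\<^sup>+z. Pe y z * (I (f y) + ennreal (f z / c)) \<partial>count_space UNIV)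
        = (\<integral>\<^sup>+z. Pe y z * I (f y) \<partial>count_space UNIV) + (\<integral>\<^sup>+z. Pe y z * ennreal (f z / c) \<partial>count_space UNIV)"
      by (simp add: distrib_left nn_integral_add)
    also have "(\<integral>\<^sup>+z. Pe y z * I (f y) \<partial>count_space UNIV) = I (f y)"
      by (simp add: nn_integral_multc sumP)
    also have "(\<integral>\<^sup>+z. Pe y z * ennreal (f z / c) \<partial>count_space UNIV)
        = (\<integral>\<^sup>+z. ennreal (jumpP \<Gamma> y z * (f z / c)) \<partial>count_space UNIV)"
      unfolding Pe_def using jumpP_nonneg fpos c_pos
      by (intro nn_integral_cong) (metis ennreal_mult' divide_nonneg_pos less_imp_le)
    also have "\<dots> = ennreal ((\<Sum>\<^sub>\<infinity>z\<in>UNIV - {y}. \<Gamma> y z * (f z / c)) / jump_rate \<Gamma> y)"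
    proof (rule sum_jumpP_fun)
      have "(\<lambda>z. \<Gamma> y z * f z * (1 / c)) summable_on (UNIV - {y})"
        by (rule summable_on_cmult_left[OF summ])
      then show "(\<lambda>z. \<Gamma> y z * (f z / c)) summable_on (UNIV - {y})" by simp
      show "0 \<le> f z / c" for z using fpos c_pos by (simp add: less_imp_le)
    qed
    also have "(\<Sum>\<^sub>\<infinity>z\<in>UNIV - {y}. \<Gamma> y z * (f z / c)) = Sf / c"
    proof -
      have "(\<Sum>\<^sub>\<infinity>z\<in>UNIV - {y}. \<Gamma> y z * (f z / c)) = (\<Sum>\<^sub>\<infinity>z\<in>UNIV - {y}. \<Gamma> y z * f z * (1 / c))"
        by simp
      also have "\<dots> = Sf * (1 / c)" unfolding Sf_def by (rule infsum_cmult_left) (use summ in auto)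
      finally show ?thesis by simp
    qed
    finally show ?thesis by (simp add: R_def \<gamma>_def)
  qed
  ultimately have main: "(\<integral>\<^sup>+z. Pe y z * I (f z) \<partial>count_space UNIV) + ennreal (f y / c) \<le> I (f y) + ennreal R"
    by simp
  have "ennreal (f y / c) + (ennreal (1 / \<gamma>) + (\<integral>\<^sup>+z. Pe y z * I (f z) \<partial>count_space UNIV))
      = ((\<integral>\<^sup>+z. Pe y z * I (f z) \<partial>count_space UNIV) + ennreal (f y / c)) + ennreal (1 / \<gamma>)"
    by (simp add: add_ac)
  also have "\<dots> \<le> I (f y) + ennreal R + ennreal (1 / \<gamma>)"
    using main by (rule add_right_mono)
  also have "\<dots> = I (f y) + ennreal (R + 1 / \<gamma>)"
    using R_nn \<gamma>_pos by (simp add: add.assoc)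
  also have "\<dots> \<le> I (f y) + ennreal (f y / c)"
    using R_le by (intro add_left_mono ennreal_leI)
  also have "\<dots> = ennreal (f y / c) + I (f y)" by (simp add: add_ac)
  finally have "ennreal (f y / c) + (ennreal (1 / \<gamma>) + (\<integral>\<^sup>+z. Pe y z * I (f z) \<partial>count_space UNIV))
      \<le> ennreal (f y / c) + I (f y)" .
  then show ?thesis
    by (simp add: ennreal_add_left_cancel_le \<gamma>_def)
qed

locale ctmc = qmat \<Gamma> for \<Gamma> :: "'x::countable \<Rightarrow> 'x \<Rightarrow> real" +
  fixes M :: "'w measure" and X :: "nat \<Rightarrow> 'w \<Rightarrow> 'x" and S :: "nat \<Rightarrow> 'w \<Rightarrow> real" and x0 :: 'x
  assumes law: "ctmc_law M X S \<Gamma> x0"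
begin

lemma prob: "prob_space M" using law by (simp add: ctmc_law_def)

lemma X_meas[measurable]: "X k \<in> measurable M (count_space UNIV)"
  using law by (simp add: ctmc_law_def)

lemma S_meas[measurable]: "S k \<in> borel_measurable M"
  using law by (simp add: ctmc_law_def)

definition E :: "(nat \<Rightarrow> 'x set) \<Rightarrow> (nat \<Rightarrow> real) \<Rightarrow> nat \<Rightarrow> 'w set" where
  "E C ts n = {\<omega> \<in> space M. (\<forall>k\<le>n. X k \<omega> \<in> C k) \<and> (\<forall>k\<in>{1..n}. ts k < S k \<omega>)}"

lemma E_sets[measurable]: "E C ts n \<in> sets M"
  unfolding E_def by measurable

lemma law_e:
  assumes "\<forall>k. 0 \<le> ts k"
  shows "emeasure M (E (\<lambda>k. {xs k}) ts n)
    = ennreal ((if xs 0 = x0 then 1 else 0) *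
          (\<Prod>k\<in>{1..n}. jumpP \<Gamma> (xs (k - 1)) (xs k) * exp (- jump_rate \<Gamma> (xs (k - 1)) * ts k)))"
proof -
  interpret prob_space M by (rule prob)
  have "measure M (E (\<lambda>k. {xs k}) ts n)
     = (if xs 0 = x0 then 1 else 0) *
          (\<Prod>k\<in>{1..n}. jumpP \<Gamma> (xs (k - 1)) (xs k) * exp (- jump_rate \<Gamma> (xs (k - 1)) * ts k))"
    using law assms unfolding ctmc_law_def E_def by auto
  then show ?thesis by (simp add: emeasure_eq_measure)
qed

lemma markov:
  assumes ts: "\<forall>k. 0 \<le> ts k" and t: "0 \<le> t" and Cn: "C n = {w}"
  shows "emeasure M (E (C(Suc n := {z})) (ts(Suc n := t)) (Suc n))
       = emeasure M (E C ts n) * Pe w z * ennreal (exp (- jump_rate \<Gamma> w * t))"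
proof -
  define I where "I = {xs \<in> PiE {..n} (\<lambda>_. UNIV). \<forall>k\<le>n. xs k \<in> C k}"
  have cI: "countable I"
    unfolding I_def by (rule countable_subset[of _ "PiE {..n} (\<lambda>_. UNIV)"]) (auto intro: countable_PiE)
  define F where "F xs = E (\<lambda>k. {xs k}) ts n" for xs
  define F' where "F' xs = E (\<lambda>k. {(xs(Suc n := z)) k}) (ts(Suc n := t)) (Suc n)" for xs
  have ts': "\<forall>k. 0 \<le> (ts(Suc n := t)) k" using ts t by auto
  have eq1: "E C ts n = \<Union>(F ` I)"
  proof (intro equalityI subsetI)
    fix \<omega> assume w: "\<omega> \<in> E C ts n"
    define xs where "xs = restrict (\<lambda>k. X k \<omega>) {..n}"
    have "xs \<in> I" using w unfolding I_def xs_def E_def by auto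
    moreover have "\<omega> \<in> F xs" using w unfolding F_def xs_def E_def by auto
    ultimately show "\<omega> \<in> \<Union>(F ` I)" by auto
  next
    fix \<omega> assume "\<omega> \<in> \<Union>(F ` I)"
    then show "\<omega> \<in> E C ts n" unfolding I_def F_def E_def by auto
  qed
  have eq2: "E (C(Suc n := {z})) (ts(Suc n := t)) (Suc n) = \<Union>(F' ` I)"
  proof (intro equalityI subsetI)
    fix \<omega> assume w: "\<omega> \<in> E (C(Suc n := {z})) (ts(Suc n := t)) (Suc n)"
    define xs where "xs = restrict (\<lambda>k. X k \<omega>) {..n}"
    have "X k \<omega> \<in> C k" if "k \<le> n" for k
    proof -
      have "k \<le> Suc n" "k \<noteq> Suc n" using that by auto
      then show ?thesis using w unfolding E_def by force
    qed
    then have "xs \<in> I" unfolding I_def xs_def by auto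
    moreover have "\<omega> \<in> F' xs" using w unfolding F'_def xs_def E_def
      by (auto simp: le_Suc_eq split: if_splits)
    ultimately show "\<omega> \<in> \<Union>(F' ` I)" by auto
  next
    fix \<omega> assume "\<omega> \<in> \<Union>(F' ` I)"
    then show "\<omega> \<in> E (C(Suc n := {z})) (ts(Suc n := t)) (Suc n)"
      unfolding I_def F'_def E_def by (auto simp: le_Suc_eq)
  qed
  have diff: "\<exists>k\<le>n. xs k \<noteq> ys k" if "xs \<in> I" "ys \<in> I" "xs \<noteq> ys" for xs ys
  proof (rule ccontr)
    assume "\<not> (\<exists>k\<le>n. xs k \<noteq> ys k)"
    then have "xs = ys" using that(1,2) unfolding I_def
      by (intro extensionalityI[of _ "{..n}"]) (auto simp: PiE_def)
    with that(3) show False by simp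
  qed
  have disj1: "disjoint_family_on F I"
    unfolding disjoint_family_on_def
  proof (intro ballI impI)
    fix xs ys assume "xs \<in> I" "ys \<in> I" "xs \<noteq> ys"
    then obtain k where k: "k \<le> n" "xs k \<noteq> ys k" using diff by blast
    show "F xs \<inter> F ys = {}"
    proof (intro equalityI subsetI)
      fix \<omega> assume "\<omega> \<in> F xs \<inter> F ys"
      then have "X k \<omega> = xs k" "X k \<omega> = ys k" using k unfolding F_def E_def by auto
      with k show "\<omega> \<in> {}" by simp
    qed simp
  qed
  have disj2: "disjoint_family_on F' I"
    unfolding disjoint_family_on_def
  proof (intro ballI impI)
    fix xs ys assume "xs \<in> I" "ys \<in> I" "xs \<noteq> ys"
    then obtain k where k: "k \<le> n" "xs k \<noteq> ys k" using diff by blast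
    show "F' xs \<inter> F' ys = {}"
    proof (intro equalityI subsetI)
      fix \<omega> assume w: "\<omega> \<in> F' xs \<inter> F' ys"
      have "k \<le> Suc n" "k \<noteq> Suc n" using k by auto
      then have "X k \<omega> = xs k" "X k \<omega> = ys k" using w unfolding F'_def E_def by force+
      with k show "\<omega> \<in> {}" by simp
    qed simp
  qed
  define c where "c = Pe w z * ennreal (exp (- jump_rate \<Gamma> w * t))"
  have each: "emeasure M (F' xs) = emeasure M (F xs) * c" if "xs \<in> I" for xs
  proof -
    have xn: "xs n = w" using that Cn unfolding I_def by auto
    define A where "A = (if xs 0 = x0 then 1 else 0 :: real)"
    define Pn where "Pn = (\<Prod>k\<in>{1..n}. jumpP \<Gamma> (xs (k - 1)) (xs k) * exp (- jump_rate \<Gamma> (xs (k - 1)) * ts k))"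
    have Pn_nn: "0 \<le> Pn" unfolding Pn_def by (intro prod_nonneg) (auto intro: mult_nonneg_nonneg jumpP_nonneg)
    have A_nn: "0 \<le> A" unfolding A_def by simp
    have "emeasure M (F' xs) = ennreal ((if (xs(Suc n := z)) 0 = x0 then 1 else 0) *
          (\<Prod>k\<in>{1..Suc n}. jumpP \<Gamma> ((xs(Suc n := z)) (k - 1)) ((xs(Suc n := z)) k) *
             exp (- jump_rate \<Gamma> ((xs(Suc n := z)) (k - 1)) * (ts(Suc n := t)) k)))"
      unfolding F'_def by (rule law_e[OF ts'])
    also have "(\<Prod>k\<in>{1..Suc n}. jumpP \<Gamma> ((xs(Suc n := z)) (k - 1)) ((xs(Suc n := z)) k) *
             exp (- jump_rate \<Gamma> ((xs(Suc n := z)) (k - 1)) * (ts(Suc n := t)) k))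
        = Pn * (jumpP \<Gamma> w z * exp (- jump_rate \<Gamma> w * t))"
      unfolding Pn_def using xn by (auto intro!: prod.cong)
    also have "(if (xs(Suc n := z)) 0 = x0 then 1 else 0) = A" by (simp add: A_def)
    finally have "emeasure M (F' xs) = ennreal (A * (Pn * (jumpP \<Gamma> w z * exp (- jump_rate \<Gamma> w * t))))" .
    also have "\<dots> = ennreal (A * Pn) * c"
      unfolding c_def Pe_def using A_nn Pn_nn jumpP_nonneg[of w z]
      by (simp add: ennreal_mult[symmetric] mult.assoc)
    also have "ennreal (A * Pn) = emeasure M (F xs)"
      unfolding F_def A_def Pn_def by (rule law_e[OF ts, symmetric])
    finally show ?thesis .
  qed
  have "emeasure M (E (C(Suc n := {z})) (ts(Suc n := t)) (Suc n)) = (\<integral>\<^sup>+xs. emeasure M (F' xs) \<partial>count_space I)"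
    unfolding eq2 by (rule emeasure_UN_countable[OF _ cI disj2]) (simp add: F'_def)
  also have "\<dots> = (\<integral>\<^sup>+xs. emeasure M (F xs) * c \<partial>count_space I)"
    by (rule nn_integral_cong) (simp add: each)
  also have "\<dots> = (\<integral>\<^sup>+xs. emeasure M (F xs) \<partial>count_space I) * c"
    by (rule nn_integral_multc) simp
  also have "(\<integral>\<^sup>+xs. emeasure M (F xs) \<partial>count_space I) = emeasure M (E C ts n)"
    unfolding eq1 by (rule emeasure_UN_countable[OF _ cI disj1, symmetric]) (simp add: F_def)
  finally have "emeasure M (E (C(Suc n := {z})) (ts(Suc n := t)) (Suc n)) = emeasure M (E C ts n) * c" .
  then show ?thesis by (simp only: c_def mult.assoc)
qed

end

context ctmc
begin

lemma E_cong: "(\<And>k. k \<le> n \<Longrightarrow> C k = C' k) \<Longrightarrow> E C ts n = E C' ts n"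
  unfolding E_def by auto

lemma E_empty: "k \<le> n \<Longrightarrow> C k = {} \<Longrightarrow> E C ts n = {}"
  unfolding E_def by auto

lemma markov':
  assumes ts: "\<forall>k. 0 \<le> ts k" and t: "0 \<le> t" and Cn: "C n \<subseteq> {w}"
  shows "emeasure M (E (C(Suc n := {z})) (ts(Suc n := t)) (Suc n))
       = emeasure M (E C ts n) * Pe w z * ennreal (exp (- jump_rate \<Gamma> w * t))"
proof (cases "C n = {}")
  case True
  have "E (C(Suc n := {z})) (ts(Suc n := t)) (Suc n) = {}"
    by (rule E_empty[of n]) (use True in auto)
  moreover have "E C ts n = {}" by (rule E_empty[of n]) (use True in auto)
  ultimately show ?thesis by simp
next
  case False
  then have "C n = {w}" using Cn by auto
  then show ?thesis by (rule markov[OF ts t])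
qed

definition Cv :: "'x set \<Rightarrow> nat \<Rightarrow> 'x \<Rightarrow> nat \<Rightarrow> 'x set" where
  "Cv T n z k = (if k = 0 then {x0} else T) \<inter> (if k = n then {z} else UNIV)"

definition Ev :: "'x set \<Rightarrow> nat \<Rightarrow> 'x \<Rightarrow> 'w set" where
  "Ev T n z = E (Cv T n z) (\<lambda>_. 0) n"

lemma Ev_alt: "Ev T n z = {\<omega> \<in> space M. X 0 \<omega> = x0 \<and> (\<forall>k\<in>{1..n}. X k \<omega> \<in> T \<and> 0 < S k \<omega>) \<and> X n \<omega> = z}"
proof (intro equalityI subsetI)
  fix \<omega> assume w: "\<omega> \<in> Ev T n z"
  then have sp: "\<omega> \<in> space M" and A: "\<And>k. k \<le> n \<Longrightarrow> X k \<omega> \<in> Cv T n z k"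
    and B: "\<And>k. k \<in> {1..n} \<Longrightarrow> 0 < S k \<omega>"
    unfolding Ev_def E_def by auto
  have "X 0 \<omega> = x0" using A[of 0] by (auto simp: Cv_def split: if_splits)
  moreover have "X k \<omega> \<in> T" if "k \<in> {1..n}" for k
    using A[of k] that by (auto simp: Cv_def split: if_splits)
  moreover have "X n \<omega> = z" using A[of n] by (auto simp: Cv_def split: if_splits)
  ultimately show "\<omega> \<in> {\<omega> \<in> space M. X 0 \<omega> = x0 \<and> (\<forall>k\<in>{1..n}. X k \<omega> \<in> T \<and> 0 < S k \<omega>) \<and> X n \<omega> = z}"
    using sp B by auto
next
  fix \<omega> assume "\<omega> \<in> {\<omega> \<in> space M. X 0 \<omega> = x0 \<and> (\<forall>k\<in>{1..n}. X k \<omega> \<in> T \<and> 0 < S k \<omega>) \<and> X n \<omega> = z}"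
  then have sp: "\<omega> \<in> space M" and x: "X 0 \<omega> = x0" and T: "\<And>k. k \<in> {1..n} \<Longrightarrow> X k \<omega> \<in> T"
    and B: "\<And>k. k \<in> {1..n} \<Longrightarrow> 0 < S k \<omega>" and z: "X n \<omega> = z" by auto
  have "X k \<omega> \<in> Cv T n z k" if "k \<le> n" for k
  proof (cases "k = 0")
    case True then show ?thesis using x z by (auto simp: Cv_def)
  next
    case False then show ?thesis using T[of k] z that by (auto simp: Cv_def)
  qed
  then show "\<omega> \<in> Ev T n z" unfolding Ev_def E_def using sp B by auto
qed

lemma Ev_sets[measurable]: "Ev T n z \<in> sets M"
  unfolding Ev_def by simp

lemma E_next: "E ((Cv T n w)(Suc n := {z})) ((\<lambda>_. 0)(Suc n := t)) (Suc n)
  = Ev T n w \<inter> {\<omega>. X (Suc n) \<omega> = z \<and> t < S (Suc n) \<omega>}"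
proof -
  have a: "(\<forall>k\<le>Suc n. P k) \<longleftrightarrow> (\<forall>k\<le>n. P k) \<and> P (Suc n)" for P by (auto simp: le_Suc_eq)
  have b: "(\<forall>k\<in>{1..Suc n}. P k) \<longleftrightarrow> (\<forall>k\<in>{1..n}. P k) \<and> P (Suc n)" for P
    by (auto simp add: atLeastAtMostSuc_conv)
  have c: "(\<forall>k\<le>n. X k \<omega> \<in> ((Cv T n w)(Suc n := {z})) k) \<longleftrightarrow> (\<forall>k\<le>n. X k \<omega> \<in> Cv T n w k)" for \<omega>
    by auto
  have d: "(\<forall>k\<in>{1..n}. ((\<lambda>_. 0)(Suc n := t)) k < S k \<omega>) \<longleftrightarrow> (\<forall>k\<in>{1..n}. 0 < S k \<omega>)" for \<omega>
    by auto
  show ?thesis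
    unfolding Ev_def E_def a b c d by auto
qed

lemma Ev_disj: "disjoint_family (\<lambda>w. Ev T n w \<inter> A w)"
  unfolding disjoint_family_on_def Ev_alt by auto

lemma nu_measure: "emeasure M (Ev T n z) = nu x0 T n z"
proof (induction n arbitrary: z)
  case 0
  show ?case
  proof (cases "z = x0")
    case True
    have "Ev T 0 z = E (\<lambda>k. {(\<lambda>_. x0) k}) (\<lambda>_. 0) 0"
      unfolding Ev_alt E_def using True by auto
    then show ?thesis using law_e[of "\<lambda>_. 0" "\<lambda>_. x0" 0] True by simp
  next
    case False
    then have "Ev T 0 z = {}" unfolding Ev_alt by auto
    then show ?thesis using False by simp
  qed
next
  case (Suc n)
  show ?case
  proof (cases "z \<in> T")
    case False
    then have "Ev T (Suc n) z = {}" unfolding Ev_alt by auto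
    then show ?thesis using False by simp
  next
    case True
    have eq: "Ev T (Suc n) z = (\<Union>w. Ev T n w \<inter> {\<omega>. X (Suc n) \<omega> = z \<and> 0 < S (Suc n) \<omega>})"
      unfolding Ev_alt using True by (auto simp: le_Suc_eq)
    have "emeasure M (Ev T (Suc n) z)
        = (\<integral>\<^sup>+w. emeasure M (Ev T n w \<inter> {\<omega>. X (Suc n) \<omega> = z \<and> 0 < S (Suc n) \<omega>}) \<partial>count_space UNIV)"
      unfolding eq
    proof (rule emeasure_UN_countable)
      show "Ev T n w \<inter> {\<omega>. X (Suc n) \<omega> = z \<and> 0 < S (Suc n) \<omega>} \<in> sets M" for w
        by (simp only: E_next[symmetric] E_sets)
    qed (auto simp: Ev_disj)
    also have "\<dots> = (\<integral>\<^sup>+w. nu x0 T n w * Pe w z \<partial>count_space UNIV)"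
    proof (rule nn_integral_cong)
      fix w
      have "emeasure M (Ev T n w \<inter> {\<omega>. X (Suc n) \<omega> = z \<and> 0 < S (Suc n) \<omega>})
          = emeasure M (E (Cv T n w) (\<lambda>_. 0) n) * Pe w z * ennreal (exp (- jump_rate \<Gamma> w * 0))"
        unfolding E_next[symmetric] by (rule markov') (auto simp: Cv_def)
      then show "emeasure M (Ev T n w \<inter> {\<omega>. X (Suc n) \<omega> = z \<and> 0 < S (Suc n) \<omega>}) = nu x0 T n w * Pe w z"
        using Suc.IH[of w] by (simp add: Ev_def)
    qed
    finally show ?thesis using True by simp
  qed
qed

lemma tail:
  assumes "0 \<le> t"
  shows "emeasure M (Ev T n z \<inter> {\<omega>. t < S (Suc n) \<omega>}) = nu x0 T n z * ennreal (exp (- jump_rate \<Gamma> z * t))"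
proof -
  have eq: "Ev T n z \<inter> {\<omega>. t < S (Suc n) \<omega>} = (\<Union>z'. Ev T n z \<inter> {\<omega>. X (Suc n) \<omega> = z' \<and> t < S (Suc n) \<omega>})"
    by auto
  have disj: "disjoint_family (\<lambda>z'. Ev T n z \<inter> {\<omega>. X (Suc n) \<omega> = z' \<and> t < S (Suc n) \<omega>})"
    unfolding disjoint_family_on_def by auto
  have "emeasure M (Ev T n z \<inter> {\<omega>. t < S (Suc n) \<omega>})
      = (\<integral>\<^sup>+z'. emeasure M (Ev T n z \<inter> {\<omega>. X (Suc n) \<omega> = z' \<and> t < S (Suc n) \<omega>}) \<partial>count_space UNIV)"
    unfolding eq
  proof (rule emeasure_UN_countable)
    show "Ev T n z \<inter> {\<omega>. X (Suc n) \<omega> = z' \<and> t < S (Suc n) \<omega>} \<in> sets M" for z'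
      by (simp only: E_next[symmetric] E_sets)
  qed (auto simp: disj)
  also have "\<dots> = (\<integral>\<^sup>+z'. (nu x0 T n z * ennreal (exp (- jump_rate \<Gamma> z * t))) * Pe z z' \<partial>count_space UNIV)"
  proof (rule nn_integral_cong)
    fix z'
    have "emeasure M (Ev T n z \<inter> {\<omega>. X (Suc n) \<omega> = z' \<and> t < S (Suc n) \<omega>})
        = emeasure M (E (Cv T n z) (\<lambda>_. 0) n) * Pe z z' * ennreal (exp (- jump_rate \<Gamma> z * t))"
      unfolding E_next[symmetric] using assms by (intro markov') (auto simp: Cv_def)
    then show "emeasure M (Ev T n z \<inter> {\<omega>. X (Suc n) \<omega> = z' \<and> t < S (Suc n) \<omega>})
        = (nu x0 T n z * ennreal (exp (- jump_rate \<Gamma> z * t))) * Pe z z'"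
      using nu_measure[of T n z] by (simp add: Ev_def mult_ac)
  qed
  also have "\<dots> = nu x0 T n z * ennreal (exp (- jump_rate \<Gamma> z * t))"
    by (simp add: nn_integral_cmult sumP)
  finally show ?thesis .
qed

end

lemma exp_integral:
  assumes l: "0 < (l::real)"
  shows "(\<integral>\<^sup>+t. ennreal (indicator {0..} t * exp (- l * t)) \<partial>lborel) = ennreal (1 / l)"
proof -
  interpret D: prob_space "density lborel (exponential_density l)"
    by (rule prob_space_exponential_density[OF l])
  have "1 = emeasure (density lborel (exponential_density l)) UNIV"
    using D.emeasure_space_1 by simp
  also have "\<dots> = (\<integral>\<^sup>+t. ennreal (exponential_density l t) \<partial>lborel)"
    by (subst emeasure_density) auto
  also have "\<dots> = (\<integral>\<^sup>+t. ennreal l * ennreal (indicator {0..} t * exp (- l * t)) \<partial>lborel)"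
    using l by (intro nn_integral_cong)
      (auto simp: exponential_density_def ennreal_mult[symmetric] mult_ac split: split_indicator)
  also have "\<dots> = ennreal l * (\<integral>\<^sup>+t. ennreal (indicator {0..} t * exp (- l * t)) \<partial>lborel)"
    by (rule nn_integral_cmult) auto
  finally have one: "ennreal l * (\<integral>\<^sup>+t. ennreal (indicator {0..} t * exp (- l * t)) \<partial>lborel) = 1" ..
  have "(\<integral>\<^sup>+t. ennreal (indicator {0..} t * exp (- l * t)) \<partial>lborel)
      = (ennreal (1 / l) * ennreal l) * (\<integral>\<^sup>+t. ennreal (indicator {0..} t * exp (- l * t)) \<partial>lborel)"
    using l by (simp add: ennreal_mult[symmetric])
  also have "\<dots> = ennreal (1 / l)" by (simp only: mult.assoc one) simp
  finally show ?thesis .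
qed

lemma ennreal_as_integral: "ennreal s = (\<integral>\<^sup>+t. indicator {0..<s} t \<partial>lborel)"
proof (cases "0 \<le> s")
  case True then show ?thesis by simp
next
  case False then show ?thesis by (simp add: ennreal_neg)
qed

context ctmc
begin

lemma exp_S:
  "(\<integral>\<^sup>+\<omega>. ennreal (S (Suc n) \<omega>) * indicator (Ev T n z) \<omega> \<partial>M) = nu x0 T n z * ennreal (1 / jump_rate \<Gamma> z)"
proof -
  interpret prob_space M by (rule prob)
  interpret pair_sigma_finite M lborel
    unfolding pair_sigma_finite_def using prob_space_imp_sigma_finite[OF prob] sigma_finite_lborel by auto
  define F where "F \<omega> t = (if 0 \<le> t \<and> t < S (Suc n) \<omega> \<and> \<omega> \<in> Ev T n z then 1 else 0 :: ennreal)" for \<omega> t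
  have Fm: "case_prod F \<in> borel_measurable (M \<Otimes>\<^sub>M lborel)"
    unfolding F_def by measurable
  have "(\<integral>\<^sup>+\<omega>. ennreal (S (Suc n) \<omega>) * indicator (Ev T n z) \<omega> \<partial>M) = (\<integral>\<^sup>+\<omega>. \<integral>\<^sup>+t. F \<omega> t \<partial>lborel \<partial>M)"
  proof (rule nn_integral_cong)
    fix \<omega>
    show "ennreal (S (Suc n) \<omega>) * indicator (Ev T n z) \<omega> = (\<integral>\<^sup>+t. F \<omega> t \<partial>lborel)"
    proof (cases "\<omega> \<in> Ev T n z")
      case True
      have "ennreal (S (Suc n) \<omega>) * indicator (Ev T n z) \<omega> = ennreal (S (Suc n) \<omega>)"
        using True by simp
      also have "\<dots> = (\<integral>\<^sup>+t. indicator {0..<S (Suc n) \<omega>} t \<partial>lborel)"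
        by (rule ennreal_as_integral)
      also have "\<dots> = (\<integral>\<^sup>+t. F \<omega> t \<partial>lborel)"
        using True by (intro nn_integral_cong) (auto simp: F_def split: split_indicator)
      finally show ?thesis .
    next
      case False then show ?thesis by (simp add: F_def)
    qed
  qed
  also have "\<dots> = (\<integral>\<^sup>+t. \<integral>\<^sup>+\<omega>. F \<omega> t \<partial>M \<partial>lborel)"
    by (rule Fubini'[OF Fm, symmetric])
  also have "\<dots> = (\<integral>\<^sup>+t. ennreal (indicator {0..} t * exp (- jump_rate \<Gamma> z * t)) * nu x0 T n z \<partial>lborel)"
  proof (rule nn_integral_cong)
    fix t :: real
    show "(\<integral>\<^sup>+\<omega>. F \<omega> t \<partial>M) = ennreal (indicator {0..} t * exp (- jump_rate \<Gamma> z * t)) * nu x0 T n z"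
    proof (cases "0 \<le> t")
      case False then show ?thesis by (simp add: F_def)
    next
      case True
      have eqs: "Ev T n z \<inter> {\<omega>. t < S (Suc n) \<omega>} = Ev T n z \<inter> {\<omega> \<in> space M. t < S (Suc n) \<omega>}"
        using sets.sets_into_space[OF Ev_sets[of T n z]] by auto
      have ms: "Ev T n z \<inter> {\<omega>. t < S (Suc n) \<omega>} \<in> sets M" unfolding eqs by measurable
      have "(\<integral>\<^sup>+\<omega>. F \<omega> t \<partial>M) = (\<integral>\<^sup>+\<omega>. indicator (Ev T n z \<inter> {\<omega>. t < S (Suc n) \<omega>}) \<omega> \<partial>M)"
        using True by (intro nn_integral_cong) (auto simp: F_def split: split_indicator)
      also have "\<dots> = emeasure M (Ev T n z \<inter> {\<omega>. t < S (Suc n) \<omega>})"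
        by (rule nn_integral_indicator[OF ms])
      also have "\<dots> = nu x0 T n z * ennreal (exp (- jump_rate \<Gamma> z * t))"
        by (rule tail[OF True])
      finally show ?thesis using True by (simp add: mult.commute)
    qed
  qed
  also have "\<dots> = (\<integral>\<^sup>+t. ennreal (indicator {0..} t * exp (- jump_rate \<Gamma> z * t)) \<partial>lborel) * nu x0 T n z"
    by (rule nn_integral_multc) measurable
  also have "\<dots> = nu x0 T n z * ennreal (1 / jump_rate \<Gamma> z)"
    by (subst exp_integral[OF gamma_pos]) (simp add: mult.commute)
  finally show ?thesis .
qed

lemma Ev_disj_fam: "disjoint_family (Ev T n)"
  unfolding disjoint_family_on_def
proof (intro ballI impI)
  fix z z' :: 'x assume "z \<noteq> z'"
  show "Ev T n z \<inter> Ev T n z' = {}"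
  proof (intro equalityI subsetI)
    fix \<omega> assume "\<omega> \<in> Ev T n z \<inter> Ev T n z'"
    then have "X n \<omega> = z" "X n \<omega> = z'" unfolding Ev_alt by auto
    with \<open>z \<noteq> z'\<close> show "\<omega> \<in> {}" by simp
  qed simp
qed

lemma Ev_in: "\<omega> \<in> space M \<Longrightarrow> X 0 \<omega> = x0 \<Longrightarrow> (\<forall>k\<in>{1..n}. X k \<omega> \<in> T \<and> 0 < S k \<omega>) \<Longrightarrow> \<omega> \<in> Ev T n (X n \<omega>)"
  unfolding Ev_alt by simp

lemma Ev_D: "\<omega> \<in> Ev T n z \<Longrightarrow> \<omega> \<in> space M \<and> X 0 \<omega> = x0 \<and> (\<forall>k\<in>{1..n}. X k \<omega> \<in> T \<and> 0 < S k \<omega>) \<and> X n \<omega> = z"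
  unfolding Ev_alt by simp

lemma AE_pos: "AE \<omega> in M. X 0 \<omega> = x0 \<and> (\<forall>k. 0 < k \<longrightarrow> 0 < S k \<omega>)"
proof -
  interpret prob_space M by (rule prob)
  define P where "P n = {\<omega> \<in> space M. X 0 \<omega> = x0 \<and> (\<forall>k\<in>{1..n}. 0 < S k \<omega>)}" for n
  have "AE \<omega> in M. \<omega> \<in> P n" for n
  proof (rule AE_prob_1)
    have eq: "P n = (\<Union>z. Ev UNIV n z)"
    proof (intro equalityI subsetI)
      fix \<omega> assume "\<omega> \<in> P n"
      then have "\<omega> \<in> Ev UNIV n (X n \<omega>)" unfolding P_def by (intro Ev_in) auto
      then show "\<omega> \<in> (\<Union>z. Ev UNIV n z)" by blast
    next
      fix \<omega> assume "\<omega> \<in> (\<Union>z. Ev UNIV n z)"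
      then obtain z where "\<omega> \<in> Ev UNIV n z" by blast
      from Ev_D[OF this] show "\<omega> \<in> P n" unfolding P_def by simp
    qed
    have "emeasure M (P n) = (\<integral>\<^sup>+z. emeasure M (Ev UNIV n z) \<partial>count_space UNIV)"
      unfolding eq by (rule emeasure_UN_countable) (auto simp: Ev_disj_fam)
    also have "\<dots> = 1" by (simp add: nu_measure nu_mass)
    finally show "prob (P n) = 1" by (simp add: emeasure_eq_measure)
  qed
  then have "AE \<omega> in M. \<forall>n. \<omega> \<in> P n" by (simp add: AE_all_countable)
  then show ?thesis
  proof (rule AE_mp, intro AE_I2 impI)
    fix \<omega> assume all: "\<forall>n. \<omega> \<in> P n"
    have "X 0 \<omega> = x0" using all[rule_format, of 0] unfolding P_def by simp
    moreover have "0 < S k \<omega>" if "0 < k" for k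
    proof -
      have "\<omega> \<in> P k" using all by blast
      moreover have "k \<in> {1..k}" using that by simp
      ultimately show ?thesis unfolding P_def by blast
    qed
    ultimately show "X 0 \<omega> = x0 \<and> (\<forall>k. 0 < k \<longrightarrow> 0 < S k \<omega>)" by blast
  qed
qed

lemma AE_hit:
  assumes q: "(\<lambda>n. \<integral>\<^sup>+z. nu x0 T n z \<partial>count_space UNIV) \<longlonglongrightarrow> 0"
  shows "AE \<omega> in M. \<not> (\<forall>n. \<omega> \<in> (\<Union>z. Ev T n z))"
proof -
  define N where "N = (\<Inter>n. \<Union>z. Ev T n z)"
  have Nm: "N \<in> sets M" unfolding N_def by measurable
  have le: "emeasure M N \<le> (\<integral>\<^sup>+z. nu x0 T n z \<partial>count_space UNIV)" for n
  proof -
    have "emeasure M N \<le> emeasure M (\<Union>z. Ev T n z)"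
      by (rule emeasure_mono) (auto simp: N_def)
    also have "\<dots> = (\<integral>\<^sup>+z. emeasure M (Ev T n z) \<partial>count_space UNIV)"
      by (rule emeasure_UN_countable) (auto simp: Ev_disj_fam)
    finally show ?thesis by (simp add: nu_measure)
  qed
  have "emeasure M N \<le> 0"
    by (rule LIMSEQ_le_const[OF q]) (use le in auto)
  then have "N \<in> null_sets M" using Nm by auto
  then have "AE \<omega> in M. \<omega> \<notin> N" by (rule AE_not_in)
  then show ?thesis by (simp add: N_def)
qed

end

lemma jt_mono:
  assumes "\<And>k. 0 < k \<Longrightarrow> 0 < S k \<omega>" "i \<le> j"
  shows "jump_time S i \<omega> \<le> jump_time S j \<omega>"
  unfolding jump_time_def using assms by (intro sum_mono2) (auto intro: less_imp_le)

lemma hit_le: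
  assumes pos: "\<And>k. 0 < k \<Longrightarrow> 0 < S k \<omega>" and XN: "X N \<omega> \<in> A"
  shows "hit_time X S A \<omega> \<le> ennreal (jump_time S N \<omega>)"
proof -
  define t where "t = jump_time S N \<omega>"
  have t0: "0 \<le> t" unfolding t_def jump_time_def using pos by (intro sum_nonneg) (auto intro: less_imp_le)
  have PN: "jump_time S N \<omega> \<le> t \<and> t < jump_time S (Suc N) \<omega>"
    unfolding t_def jump_time_def using pos[of "Suc N"] by simp
  have least: "(LEAST n. jump_time S n \<omega> \<le> t \<and> t < jump_time S (Suc n) \<omega>) = N"
  proof (rule Least_equality)
    show "jump_time S N \<omega> \<le> t \<and> t < jump_time S (Suc N) \<omega>" by (rule PN)
  next
    fix m assume m: "jump_time S m \<omega> \<le> t \<and> t < jump_time S (Suc m) \<omega>"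
    show "N \<le> m"
    proof (rule ccontr)
      assume "\<not> N \<le> m"
      then have "Suc m \<le> N" by simp
      then have "jump_time S (Suc m) \<omega> \<le> t" unfolding t_def using jt_mono[of S \<omega> "Suc m" N] pos by blast
      with m show False by simp
    qed
  qed
  have "ctmc_state X S t \<omega> = Some (X N \<omega>)"
    unfolding ctmc_state_def using PN least by auto
  then have "ennreal t \<in> {ennreal t | t. 0 \<le> t \<and> ctmc_state X S t \<omega> \<in> Some ` A}"
    using t0 XN by auto
  then show ?thesis unfolding hit_time_def t_def[symmetric] by (rule Inf_lower)
qed

context ctmc
begin

lemma main_bound:
  assumes x0T: "x0 \<in> T"
    and q: "(\<lambda>n. \<integral>\<^sup>+z. nu x0 T n z \<partial>count_space UNIV) \<longlonglongrightarrow> 0"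
  shows "(\<integral>\<^sup>+\<omega>. hit_time X S (- T) \<omega> \<partial>M)
     \<le> (\<Sum>n. \<integral>\<^sup>+z. nu x0 T n z * ennreal (1 / jump_rate \<Gamma> z) \<partial>count_space UNIV)"
proof -
  define En where "En n = (\<Union>z. Ev T n z)" for n
  have En_sets[measurable]: "En n \<in> sets M" for n unfolding En_def by measurable
  have ind: "indicator (Ev T n z) \<omega> = indicator {X n \<omega>} z * (indicator (En n) \<omega> :: ennreal)" for n z \<omega>
  proof (cases "\<omega> \<in> Ev T n z")
    case True
    then have "X n \<omega> = z" "\<omega> \<in> En n" using Ev_D[OF True] unfolding En_def by auto
    then show ?thesis using True by simp
  next
    case False
    have "\<not> (z = X n \<omega> \<and> \<omega> \<in> En n)"
    proof
      assume h: "z = X n \<omega> \<and> \<omega> \<in> En n"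
      then obtain z' where z': "\<omega> \<in> Ev T n z'" unfolding En_def by auto
      then have "X n \<omega> = z'" using Ev_D by blast
      with h z' False show False by simp
    qed
    then show ?thesis using False by (auto split: split_indicator)
  qed
  have int_n: "(\<integral>\<^sup>+\<omega>. ennreal (S (Suc n) \<omega>) * indicator (En n) \<omega> \<partial>M)
      = (\<integral>\<^sup>+z. nu x0 T n z * ennreal (1 / jump_rate \<Gamma> z) \<partial>count_space UNIV)" for n
  proof -
    have "(\<integral>\<^sup>+\<omega>. ennreal (S (Suc n) \<omega>) * indicator (En n) \<omega> \<partial>M)
        = (\<integral>\<^sup>+\<omega>. \<integral>\<^sup>+z. ennreal (S (Suc n) \<omega>) * indicator (Ev T n z) \<omega> \<partial>count_space UNIV \<partial>M)"
    proof (rule nn_integral_cong)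
      fix \<omega>
      have "(\<integral>\<^sup>+z. ennreal (S (Suc n) \<omega>) * indicator (Ev T n z) \<omega> \<partial>count_space UNIV)
          = (\<integral>\<^sup>+z. indicator {X n \<omega>} z * (ennreal (S (Suc n) \<omega>) * indicator (En n) \<omega>) \<partial>count_space UNIV)"
        by (rule nn_integral_cong) (simp add: ind mult_ac)
      also have "\<dots> = ennreal (S (Suc n) \<omega>) * indicator (En n) \<omega>"
        by (rule nn_integral_count_space_single)
      finally show "ennreal (S (Suc n) \<omega>) * indicator (En n) \<omega>
          = (\<integral>\<^sup>+z. ennreal (S (Suc n) \<omega>) * indicator (Ev T n z) \<omega> \<partial>count_space UNIV)" by simp
    qed
    also have "\<dots> = (\<integral>\<^sup>+z. \<integral>\<^sup>+\<omega>. ennreal (S (Suc n) \<omega>) * indicator (Ev T n z) \<omega> \<partial>M \<partial>count_space UNIV)"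
      by (rule nn_integral_count_space_nn_integral) auto
    also have "\<dots> = (\<integral>\<^sup>+z. nu x0 T n z * ennreal (1 / jump_rate \<Gamma> z) \<partial>count_space UNIV)"
      by (simp add: exp_S)
    finally show ?thesis .
  qed
  have AEb: "AE \<omega> in M. hit_time X S (- T) \<omega> \<le> (\<Sum>n. ennreal (S (Suc n) \<omega>) * indicator (En n) \<omega>)"
    using AE_pos AE_hit[OF q] AE_space
  proof eventually_elim
    fix \<omega>
    assume h: "X 0 \<omega> = x0 \<and> (\<forall>k. 0 < k \<longrightarrow> 0 < S k \<omega>)" "\<not> (\<forall>n. \<omega> \<in> (\<Union>z. Ev T n z))" "\<omega> \<in> space M"
    then have x: "X 0 \<omega> = x0" and pos: "\<And>k. 0 < k \<Longrightarrow> 0 < S k \<omega>" and sp: "\<omega> \<in> space M" by auto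
    have inEn: "\<omega> \<in> En n \<longleftrightarrow> (\<forall>k\<in>{1..n}. X k \<omega> \<in> T)" for n
    proof
      assume "\<omega> \<in> En n"
      then obtain z where "\<omega> \<in> Ev T n z" unfolding En_def by auto
      then show "\<forall>k\<in>{1..n}. X k \<omega> \<in> T" using Ev_D by blast
    next
      assume "\<forall>k\<in>{1..n}. X k \<omega> \<in> T"
      then have "\<omega> \<in> Ev T n (X n \<omega>)" using sp x pos by (intro Ev_in) auto
      then show "\<omega> \<in> En n" unfolding En_def by auto
    qed
    have ex: "\<exists>k. 1 \<le> k \<and> X k \<omega> \<notin> T"
      using h(2) unfolding En_def[symmetric] inEn by auto
    define N where "N = (LEAST k. 1 \<le> k \<and> X k \<omega> \<notin> T)"
    have N: "1 \<le> N" "X N \<omega> \<notin> T" using LeastI_ex[OF ex] unfolding N_def by auto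
    have below: "X k \<omega> \<in> T" if "1 \<le> k" "k < N" for k
      using not_less_Least[of k "\<lambda>k. 1 \<le> k \<and> X k \<omega> \<notin> T"] that unfolding N_def by auto
    have term0: "ennreal (S (Suc n) \<omega>) * indicator (En n) \<omega> = 0" if "n \<notin> {..<N}" for n
    proof -
      have "\<omega> \<notin> En n" using N that unfolding inEn by auto
      then show ?thesis by simp
    qed
    have "(\<Sum>n. ennreal (S (Suc n) \<omega>) * indicator (En n) \<omega>)
        = (\<Sum>n<N. ennreal (S (Suc n) \<omega>) * indicator (En n) \<omega>)"
      by (rule suminf_finite) (use term0 in auto)
    also have "\<dots> = (\<Sum>n<N. ennreal (S (Suc n) \<omega>))"
    proof (rule sum.cong)
      fix n assume "n \<in> {..<N}"
      then have "\<omega> \<in> En n" unfolding inEn using below by auto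
      then show "ennreal (S (Suc n) \<omega>) * indicator (En n) \<omega> = ennreal (S (Suc n) \<omega>)" by simp
    qed simp
    also have "\<dots> = ennreal (\<Sum>n<N. S (Suc n) \<omega>)"
      using pos by (intro sum_ennreal) (auto intro: less_imp_le)
    also have "(\<Sum>n<N. S (Suc n) \<omega>) = jump_time S N \<omega>"
      unfolding jump_time_def by (simp add: sum.atLeast1_atMost_eq)
    finally have eq: "(\<Sum>n. ennreal (S (Suc n) \<omega>) * indicator (En n) \<omega>) = ennreal (jump_time S N \<omega>)" .
    have "hit_time X S (- T) \<omega> \<le> ennreal (jump_time S N \<omega>)"
      by (rule hit_le) (use pos N in auto)
    then show "hit_time X S (- T) \<omega> \<le> (\<Sum>n. ennreal (S (Suc n) \<omega>) * indicator (En n) \<omega>)"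
      using eq by simp
  qed
  have "(\<integral>\<^sup>+\<omega>. hit_time X S (- T) \<omega> \<partial>M) \<le> (\<integral>\<^sup>+\<omega>. (\<Sum>n. ennreal (S (Suc n) \<omega>) * indicator (En n) \<omega>) \<partial>M)"
    by (rule nn_integral_mono_AE[OF AEb])
  also have "\<dots> = (\<Sum>n. \<integral>\<^sup>+\<omega>. ennreal (S (Suc n) \<omega>) * indicator (En n) \<omega> \<partial>M)"
    by (rule nn_integral_suminf) auto
  also have "\<dots> = (\<Sum>n. \<integral>\<^sup>+z. nu x0 T n z * ennreal (1 / jump_rate \<Gamma> z) \<partial>count_space UNIV)"
    by (simp add: int_n)
  finally show ?thesis .
qed

end

theorem proposition1p2:
  fixes \<Gamma> :: "'x::countable \<Rightarrow> 'x \<Rightarrow> real"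
    and f :: "'x \<Rightarrow> real" and g :: "real \<Rightarrow> real"
    and a b :: real and B :: ennreal
    and M :: "'w measure" and X :: "nat \<Rightarrow> 'w \<Rightarrow> 'x" and S :: "nat \<Rightarrow> 'w \<Rightarrow> real"
    and x :: 'x
  assumes "infinite (UNIV :: 'x set)"
    and "is_Q_matrix \<Gamma>"
    and "jump_irreducible \<Gamma>"
    and "jump_recurrent \<Gamma>"
    and "in_Dom_plus \<Gamma> f"
    and "\<forall>y. 0 < f y"
    and "bdd_above (range f)"
    and "(SUP y. f y) = b"
    and "\<forall>c. 0 < c \<and> c < b \<longrightarrow> finite {y. f y \<le> c}"
    and "mono_on {0..b} g"
    and "\<forall>y\<in>{0..b}. 0 \<le> g y"
    and "B = (\<integral>\<^sup>+ y. indicator {0..b} y * inverse (ennreal (g y)) \<partial>lborel)"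
    and "B < \<top>"
    and "0 < a" and "a < b"
    and "\<forall>y. y \<notin> {z. f z \<le> a} \<longrightarrow> gen_apply \<Gamma> f y \<le> - g (f y)"
    and "x \<notin> {z. f z \<le> a}"
    and "ctmc_law M X S \<Gamma> x"
  shows "(\<integral>\<^sup>+ \<omega>. hit_time X S {z. f z \<le> a} \<omega> \<partial>M) \<le> B"
proof -
  note Q = assms(2)
  interpret ctmc \<Gamma> M X S x
    by (intro ctmc.intro qmat.intro ctmc_axioms.intro) (use assms in auto)
  have fle: "\<forall>y. f y \<le> b"
    using cSUP_upper[OF UNIV_I assms(7)] assms(8) by auto
  have b0: "0 \<le> b" using assms(14,15) by simp
  interpret gfun g b by (rule gfun.intro[OF assms(10,11) b0])
  have Ib: "I b = B" using I_b assms(12) by simp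
  have Ibfin: "I b < top" using Ib assms(13) by simp
  define T where "T = - {z. f z \<le> a}"
  have drift: "ennreal (1 / jump_rate \<Gamma> y) + (\<integral>\<^sup>+z. Pe y z * I (f z) \<partial>count_space UNIV) \<le> I (f y)"
    if "y \<in> T" for y
  proof (rule drift_main[OF Q assms(5,6) fle assms(10,11) Ibfin])
    show "gen_apply \<Gamma> f y \<le> - g (f y)" using assms(16) that unfolding T_def by auto
  qed
  have xT: "x \<in> T" using assms(17) unfolding T_def by simp
  have Hx: "I (f x) \<le> B" using I_mono[of "f x" b] fle Ib by simp
  have Hfin: "I (f x) < top" using Hx assms(13) by (simp add: le_less_trans)
  have rec: "(\<Sum>n. first_passage \<Gamma> n x x) = 1"
    using assms(4) unfolding jump_recurrent_def by simp
  have q: "(\<lambda>n. \<integral>\<^sup>+z. nu x T n z \<partial>count_space UNIV) \<longlonglongrightarrow> 0"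
    by (rule q_tendsto[where H="\<lambda>z. I (f z)", OF drift xT Hfin rec])
  have "(\<integral>\<^sup>+\<omega>. hit_time X S (- T) \<omega> \<partial>M)
     \<le> (\<Sum>n. \<integral>\<^sup>+z. nu x T n z * ennreal (1 / jump_rate \<Gamma> z) \<partial>count_space UNIV)"
    by (rule main_bound[OF xT q])
  also have "\<dots> \<le> I (f x)"
    by (rule total_le[where H="\<lambda>z. I (f z)", OF drift xT])
  also have "\<dots> \<le> B" by (rule Hx)
  finally show ?thesis unfolding T_def by simp
qed

end
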